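(* Let $G$ be an undirected graph with non-negative edge weights, cellularly embedded on a compact connected orientable surface $\Sigma$ with at least one boundary component, and let $\overline{G}$ be its $\mathbb{Z}_2$-homology cover. Let $\gamma$ be a $\mathbb{Z}_2$-minimal cycle in $G$, and let $\sigma$ be any shortest path in $G$ that intersects $\gamma$. Then there is a $\mathbb{Z}_2$-minimal cycle $\gamma'$ homologous to $\gamma$ which is the projection of a shortest path $(\gamma',h)$ in $\overline{G}$ that starts with a subpath of $(\sigma,0)$ but does not otherwise intersect $(\sigma,0)$.
   Context: Cellular embedding: every face is an open disk. $\beta=2g+b-1$. Fix a tree-coforest decomposition $(T,L,F)$ ($T$ a spanning tree of $G$; $F^*$ a spanning forest of the dual graph $G^*$, whose vertices are faces and boundary cycles, with each component containing exactly one dual boundary vertex; $L=\{e_1,\dots,e_\beta\}$ the rest); adding $e_i^*$ to $F^*$ creates a dual path $\alpha_i$, and the signature $[e]\in\mathbb{Z}_2^\beta$ of edge $e$ has $i$th bit $1$ iff $\alpha_i$ traverses $e^*$ an odd number of times; the signature of a walk is the XOR of the signatures of its edges with multiplicity. The cover $\overline{G}$ has vertices $V\times\mathbb{Z}_2^\beta$ and, for each edge $uv$ and $h$, an edge $(u,h)\to(v,h\oplus[uv])$ with the weight of $uv$; projection $\pi(v,h)=v$. For a path $p$ in $G$ from $u$ to $v$ and $h\in\mathbb{Z}_2^\beta$, $(p,h)$ denotes its unique lift starting at $(u,h)$ (ending at $(v,h\oplus[p])$). A cycle is a closed walk; its length counts edge weights with multiplicity. Two cycles are $\mathbb{Z}_2$-homologous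 if the edge sets each traverses an odd number of times differ by a boundary subgraph (the set of edges with exactly one side in some fixed subset of faces); a cycle is $\mathbb{Z}_2$-minimal if it is a shortest cycle in its homology class. *)

theory Defs
  imports Complex_Main
begin

text \<open>A graph cellularly embedded on a compact connected orientable surface is
represented by a rotation system: a finite set of darts D, a fixed-point-free
involution rv (reversal) and a permutation sc (successor around the tail vertex).
Boundary cycles are a nonempty set Bd of these face orbits (holes); the remaining
orbits are the genuine faces.\<close>

definition orb :: "('a \<Rightarrow> 'a) \<Rightarrow> 'a \<Rightarrow> 'a set" where
  "orb f x = {(f ^^ n) x | n. True}"

definition vert :: "('d \<Rightarrow> 'd) \<Rightarrow> 'd \<Rightarrow> 'd set" where
  "vert sc d = orb sc d"

definition face :: "('d \<Rightarrow> 'd) \<Rightarrow> ('d \<Rightarrow> 'd) \<Rightarrow> 'd \<Rightarrow> 'd set" where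
  "face rv sc d = orb (sc \<circ> rv) d"

definition edge :: "('d \<Rightarrow> 'd) \<Rightarrow> 'd \<Rightarrow> 'd set" where
  "edge rv d = {d, rv d}"

definition sdiff :: "'a set \<Rightarrow> 'a set \<Rightarrow> 'a set" where
  "sdiff A B = (A - B) \<union> (B - A)"

text \<open>A graph given by a dart set X, tail map vx and reversal rv; a walk from u to v
is a list of darts (possibly empty, then u = v).\<close>

definition gwalk :: "'v set \<Rightarrow> 'd set \<Rightarrow> ('d \<Rightarrow> 'v) \<Rightarrow> ('d \<Rightarrow> 'd) \<Rightarrow> 'v \<Rightarrow> 'd list \<Rightarrow> 'v \<Rightarrow> bool" where
  "gwalk Vs X vx rv u ds v \<longleftrightarrow> u \<in> Vs \<and> set ds \<subseteq> X \<and>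
     (if ds = [] then v = u
      else vx (hd ds) = u \<and> vx (rv (last ds)) = v \<and>
           (\<forall>i. Suc i < length ds \<longrightarrow> vx (rv (ds ! i)) = vx (ds ! Suc i)))"

definition gverts :: "('d \<Rightarrow> 'v) \<Rightarrow> ('d \<Rightarrow> 'd) \<Rightarrow> 'v \<Rightarrow> 'd list \<Rightarrow> 'v list" where
  "gverts vx rv u ds = u # map (\<lambda>d. vx (rv d)) ds"

definition gpath :: "'v set \<Rightarrow> 'd set \<Rightarrow> ('d \<Rightarrow> 'v) \<Rightarrow> ('d \<Rightarrow> 'd) \<Rightarrow> 'v \<Rightarrow> 'd list \<Rightarrow> 'v \<Rightarrow> bool" where
  "gpath Vs X vx rv u ds v \<longleftrightarrow> gwalk Vs X vx rv u ds v \<and> distinct (gverts vx rv u ds)"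

definition len :: "('d \<Rightarrow> real) \<Rightarrow> 'd list \<Rightarrow> real" where
  "len w ds = sum_list (map w ds)"

definition gshortest :: "'v set \<Rightarrow> 'd set \<Rightarrow> ('d \<Rightarrow> 'v) \<Rightarrow> ('d \<Rightarrow> 'd) \<Rightarrow> ('d \<Rightarrow> real)
    \<Rightarrow> 'v \<Rightarrow> 'd list \<Rightarrow> 'v \<Rightarrow> bool" where
  "gshortest Vs X vx rv w u ds v \<longleftrightarrow> gpath Vs X vx rv u ds v \<and>
     (\<forall>q. gwalk Vs X vx rv u q v \<longrightarrow> len w ds \<le> len w q)"

definition gacyclic :: "'v set \<Rightarrow> 'd set \<Rightarrow> ('d \<Rightarrow> 'v) \<Rightarrow> ('d \<Rightarrow> 'd) \<Rightarrow> bool" where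
  "gacyclic Vs X vx rv \<longleftrightarrow>
     \<not> (\<exists>u ds. ds \<noteq> [] \<and> gwalk Vs X vx rv u ds u \<and> distinct (map (edge rv) ds))"

definition Verts :: "'d set \<Rightarrow> ('d \<Rightarrow> 'd) \<Rightarrow> 'd set set" where
  "Verts D sc = vert sc ` D"

definition Faces :: "'d set \<Rightarrow> ('d \<Rightarrow> 'd) \<Rightarrow> ('d \<Rightarrow> 'd) \<Rightarrow> 'd set set" where
  "Faces D rv sc = face rv sc ` D"   \<comment> \<open>faces and boundary cycles = dual vertices\<close>

definition Edges :: "'d set \<Rightarrow> ('d \<Rightarrow> 'd) \<Rightarrow> 'd set set" where
  "Edges D rv = edge rv ` D"

definition pwalk :: "'d set \<Rightarrow> ('d \<Rightarrow> 'd) \<Rightarrow> ('d \<Rightarrow> 'd) \<Rightarrow> 'd set \<Rightarrow> 'd list \<Rightarrow> 'd set \<Rightarrow> bool" where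
  "pwalk D rv sc u ds v = gwalk (Verts D sc) D (vert sc) rv u ds v"

text \<open>Cellularly embedded graph with nonnegative edge weights on a compact connected
orientable surface with at least one boundary component; each boundary component is a
simple cycle of the graph, distinct boundary components are vertex-disjoint.\<close>
definition surface_graph :: "'d set \<Rightarrow> ('d \<Rightarrow> 'd) \<Rightarrow> ('d \<Rightarrow> 'd) \<Rightarrow> 'd set set \<Rightarrow> ('d \<Rightarrow> real) \<Rightarrow> bool" where
  "surface_graph D rv sc Bd w \<longleftrightarrow>
     finite D \<and> D \<noteq> {} \<and>
     (\<forall>d\<in>D. rv d \<in> D \<and> rv d \<noteq> d \<and> rv (rv d) = d) \<and>
     bij_betw sc D D \<and>
     (\<forall>u\<in>Verts D sc. \<forall>v\<in>Verts D sc. \<exists>ds. pwalk D rv sc u ds v) \<and>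
     (\<forall>d\<in>D. 0 \<le> w d \<and> w (rv d) = w d) \<and>
     Bd \<subseteq> Faces D rv sc \<and> Bd \<noteq> {} \<and>
     (\<forall>f\<in>Bd. inj_on (vert sc) f \<and> (\<forall>d\<in>f. rv d \<notin> f)) \<and>
     (\<forall>f1\<in>Bd. \<forall>f2\<in>Bd. f1 \<noteq> f2 \<longrightarrow> vert sc ` f1 \<inter> vert sc ` f2 = {})"

definition oddset :: "('d \<Rightarrow> 'd) \<Rightarrow> 'd list \<Rightarrow> 'd set set" where
  "oddset rv ds = {edge rv d | d. d \<in> set ds \<and> odd (length (filter (\<lambda>x. x \<in> edge rv d) ds))}"

definition bdry :: "'d set \<Rightarrow> ('d \<Rightarrow> 'd) \<Rightarrow> ('d \<Rightarrow> 'd) \<Rightarrow> 'd set set \<Rightarrow> 'd set set" where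
  "bdry D rv sc S = {edge rv d | d. d \<in> D \<and> ((face rv sc d \<in> S) \<noteq> (face rv sc (rv d) \<in> S))}"

definition homologous :: "'d set \<Rightarrow> ('d \<Rightarrow> 'd) \<Rightarrow> ('d \<Rightarrow> 'd) \<Rightarrow> 'd set set \<Rightarrow> 'd list \<Rightarrow> 'd list \<Rightarrow> bool" where
  "homologous D rv sc Bd c1 c2 \<longleftrightarrow>
     (\<exists>S. S \<subseteq> Faces D rv sc - Bd \<and> sdiff (oddset rv c1) (oddset rv c2) = bdry D rv sc S)"

definition z2_minimal :: "'d set \<Rightarrow> ('d \<Rightarrow> 'd) \<Rightarrow> ('d \<Rightarrow> 'd) \<Rightarrow> 'd set set \<Rightarrow> ('d \<Rightarrow> real)
    \<Rightarrow> 'd set \<Rightarrow> 'd list \<Rightarrow> bool" where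
  "z2_minimal D rv sc Bd w u c \<longleftrightarrow> pwalk D rv sc u c u \<and>
     (\<forall>v c'. pwalk D rv sc v c' v \<and> homologous D rv sc Bd c' c \<longrightarrow> len w c \<le> len w c')"

text \<open>T spanning tree of G; F a set of edges whose duals form a spanning forest of G*
each component of which contains exactly one boundary vertex; T, F disjoint; es an
enumeration of the remaining edges L; alpha i the dual path created by adding
(es!i)* to F*: a simple dual cycle or a simple dual path between two distinct boundary
vertices, using only darts of F and es!i, and using es!i.\<close>
definition tree_coforest :: "'d set \<Rightarrow> ('d \<Rightarrow> 'd) \<Rightarrow> ('d \<Rightarrow> 'd) \<Rightarrow> 'd set set
    \<Rightarrow> 'd set set \<Rightarrow> 'd set set \<Rightarrow> 'd set list \<Rightarrow> (nat \<Rightarrow> 'd list) \<Rightarrow> bool" where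
  "tree_coforest D rv sc Bd T F es \<alpha> \<longleftrightarrow>
     T \<subseteq> Edges D rv \<and>
     gacyclic (Verts D sc) (\<Union>T) (vert sc) rv \<and>
     (\<forall>u\<in>Verts D sc. \<forall>v\<in>Verts D sc. \<exists>ds. gwalk (Verts D sc) (\<Union>T) (vert sc) rv u ds v) \<and>
     F \<subseteq> Edges D rv \<and>
     gacyclic (Faces D rv sc) (\<Union>F) (face rv sc) rv \<and>
     (\<forall>f\<in>Faces D rv sc. \<exists>!b. b \<in> Bd \<and> (\<exists>ds. gwalk (Faces D rv sc) (\<Union>F) (face rv sc) rv f ds b)) \<and>
     T \<inter> F = {} \<and>
     distinct es \<and> set es = Edges D rv - T - F \<and>
     (\<forall>i < length es.
        set (\<alpha> i) \<subseteq> \<Union>(insert (es ! i) F) \<and>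
        (\<exists>d\<in>set (\<alpha> i). edge rv d = es ! i) \<and>
        distinct (map (edge rv) (\<alpha> i)) \<and>
        ((\<exists>f. \<alpha> i \<noteq> [] \<and> gwalk (Faces D rv sc) (\<Union>(insert (es ! i) F)) (face rv sc) rv f (\<alpha> i) f
               \<and> distinct (map (face rv sc) (\<alpha> i))) \<or>
         (\<exists>b1 b2. b1 \<in> Bd \<and> b2 \<in> Bd \<and> b1 \<noteq> b2 \<and>
               gpath (Faces D rv sc) (\<Union>(insert (es ! i) F)) (face rv sc) rv b1 (\<alpha> i) b2)))"

definition sig :: "('d \<Rightarrow> 'd) \<Rightarrow> 'd set list \<Rightarrow> (nat \<Rightarrow> 'd list) \<Rightarrow> 'd \<Rightarrow> nat set" where
  "sig rv es \<alpha> d = {i. i < length es \<and> odd (length (filter (\<lambda>x. x \<in> edge rv d) (\<alpha> i)))}"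

definition wsig :: "('d \<Rightarrow> 'd) \<Rightarrow> 'd set list \<Rightarrow> (nat \<Rightarrow> 'd list) \<Rightarrow> 'd list \<Rightarrow> nat set" where
  "wsig rv es \<alpha> ds = fold (\<lambda>d h. sdiff h (sig rv es \<alpha> d)) ds {}"

text \<open>Cover darts are pairs (d,h); cover vertices (v,h) with h a subset of {..<beta}
(an element of Z2^beta); the dart (d,h) goes from (tail d, h) to (head d, h xor [d]).\<close>

definition cdarts :: "'d set \<Rightarrow> 'd set list \<Rightarrow> ('d \<times> nat set) set" where
  "cdarts D es = D \<times> Pow {..<length es}"

definition cverts :: "'d set \<Rightarrow> ('d \<Rightarrow> 'd) \<Rightarrow> 'd set list \<Rightarrow> ('d set \<times> nat set) set" where
  "cverts D sc es = Verts D sc \<times> Pow {..<length es}"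

definition cvx :: "('d \<Rightarrow> 'd) \<Rightarrow> 'd \<times> nat set \<Rightarrow> 'd set \<times> nat set" where
  "cvx sc x = (vert sc (fst x), snd x)"

definition crev :: "('d \<Rightarrow> 'd) \<Rightarrow> 'd set list \<Rightarrow> (nat \<Rightarrow> 'd list) \<Rightarrow> 'd \<times> nat set \<Rightarrow> 'd \<times> nat set" where
  "crev rv es \<alpha> x = (rv (fst x), sdiff (snd x) (sig rv es \<alpha> (fst x)))"

definition cw :: "('d \<Rightarrow> real) \<Rightarrow> 'd \<times> nat set \<Rightarrow> real" where
  "cw w x = w (fst x)"

fun lift :: "('d \<Rightarrow> 'd) \<Rightarrow> 'd set list \<Rightarrow> (nat \<Rightarrow> 'd list) \<Rightarrow> nat set \<Rightarrow> 'd list \<Rightarrow> ('d \<times> nat set) list" where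
  "lift rv es \<alpha> h [] = []"
| "lift rv es \<alpha> h (d # ds) = (d, h) # lift rv es \<alpha> (sdiff h (sig rv es \<alpha> d)) ds"

definition cshortest :: "'d set \<Rightarrow> ('d \<Rightarrow> 'd) \<Rightarrow> ('d \<Rightarrow> 'd) \<Rightarrow> 'd set list \<Rightarrow> (nat \<Rightarrow> 'd list)
    \<Rightarrow> ('d \<Rightarrow> real) \<Rightarrow> 'd set \<times> nat set \<Rightarrow> ('d \<times> nat set) list \<Rightarrow> 'd set \<times> nat set \<Rightarrow> bool" where
  "cshortest D rv sc es \<alpha> w x P y =
     gshortest (cverts D sc es) (cdarts D es) (cvx sc) (crev rv es \<alpha>) (cw w) x P y"

end

theory Submission
  imports Defs
begin


definition wfg :: "'v set \<Rightarrow> 'd set \<Rightarrow> ('d \<Rightarrow> 'v) \<Rightarrow> ('d \<Rightarrow> 'd) \<Rightarrow> bool" where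
  "wfg Vs X vx rv \<longleftrightarrow> (\<forall>d\<in>X. vx d \<in> Vs \<and> vx (rv d) \<in> Vs)"

lemma gwalk_Nil[simp]: "gwalk Vs X vx rv u [] v \<longleftrightarrow> u \<in> Vs \<and> v = u"
  by (auto simp: gwalk_def)

lemma gwalk_Cons:
  assumes "vx (rv d) \<in> Vs"
  shows "gwalk Vs X vx rv u (d#ds) v \<longleftrightarrow>
     u \<in> Vs \<and> d \<in> X \<and> vx d = u \<and> gwalk Vs X vx rv (vx (rv d)) ds v"
proof (cases ds)
  case Nil
  then show ?thesis using assms by (auto simp: gwalk_def)
next
  case (Cons e es)
  show ?thesis
  proof
    assume H: "gwalk Vs X vx rv u (d#ds) v"
    have "\<forall>i. Suc i < length ds \<longrightarrow> vx (rv (ds ! i)) = vx (ds ! Suc i)"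
    proof (intro allI impI)
      fix i assume "Suc i < length ds"
      with H have "vx (rv ((d#ds) ! Suc i)) = vx ((d#ds) ! Suc (Suc i))"
        unfolding gwalk_def by (metis length_Cons list.distinct(1) Suc_less_eq)
      then show "vx (rv (ds ! i)) = vx (ds ! Suc i)" by simp
    qed
    moreover have "vx (rv d) = vx (hd ds)"
    proof -
      have "\<forall>i. Suc i < length (d#ds) \<longrightarrow> vx (rv ((d#ds) ! i)) = vx ((d#ds) ! Suc i)"
        using H unfolding gwalk_def if_not_P[OF list.distinct(2)] by blast
      then have "vx (rv ((d#ds) ! 0)) = vx ((d#ds) ! Suc 0)" using Cons by auto
      then show ?thesis using Cons by simp
    qed
    ultimately show "u \<in> Vs \<and> d \<in> X \<and> vx d = u \<and> gwalk Vs X vx rv (vx (rv d)) ds v"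
      using H Cons assms unfolding gwalk_def by auto
  next
    assume H: "u \<in> Vs \<and> d \<in> X \<and> vx d = u \<and> gwalk Vs X vx rv (vx (rv d)) ds v"
    have "\<forall>i. Suc i < length (d#ds) \<longrightarrow> vx (rv ((d#ds) ! i)) = vx ((d#ds) ! Suc i)"
    proof (intro allI impI)
      fix i assume "Suc i < length (d#ds)"
      then show "vx (rv ((d#ds) ! i)) = vx ((d#ds) ! Suc i)"
        using H Cons unfolding gwalk_def by (cases i) (auto)
    qed
    then show "gwalk Vs X vx rv u (d#ds) v" using H Cons unfolding gwalk_def by auto
  qed
qed

lemma gverts_Cons[simp]: "gverts vx rv u (d#ds) = u # gverts vx rv (vx (rv d)) ds"
  by (simp add: gverts_def)
lemma gverts_Nil[simp]: "gverts vx rv u [] = [u]"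
  by (simp add: gverts_def)
lemma gverts_length[simp]: "length (gverts vx rv u ds) = Suc (length ds)"
  by (simp add: gverts_def)
lemma gverts_0[simp]: "gverts vx rv u ds ! 0 = u"
  by (simp add: gverts_def)

lemma gverts_start[simp]: "u \<in> set (gverts vx rv u ds)"
  by (simp add: gverts_def)

lemma gwalk_wfgD: "wfg Vs X vx rv \<Longrightarrow> d \<in> X \<Longrightarrow> vx (rv d) \<in> Vs"
  by (auto simp: wfg_def)

lemma gwalk_Cons':
  assumes "wfg Vs X vx rv"
  shows "gwalk Vs X vx rv u (d#ds) v \<longleftrightarrow>
     u \<in> Vs \<and> d \<in> X \<and> vx d = u \<and> gwalk Vs X vx rv (vx (rv d)) ds v"
proof -
  have "gwalk Vs X vx rv u (d#ds) v \<Longrightarrow> d \<in> X" by (auto simp: gwalk_def)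
  then show ?thesis using gwalk_Cons[of vx rv d Vs X u ds v] assms
    by (auto simp: wfg_def)
qed

lemma gwalk_append:
  assumes "wfg Vs X vx rv"
  shows "gwalk Vs X vx rv u (xs @ ys) v \<longleftrightarrow>
    (\<exists>m. gwalk Vs X vx rv u xs m \<and> gwalk Vs X vx rv m ys v)"
  using assms
proof (induction xs arbitrary: u)
  case Nil
  then show ?case by (cases ys) (auto simp: gwalk_def)
next
  case (Cons a xs)
  then show ?case by (auto simp: gwalk_Cons')
qed

lemma gwalk_start: "gwalk Vs X vx rv u ds v \<Longrightarrow> u \<in> Vs"
  by (simp add: gwalk_def)

lemma gwalk_end: "wfg Vs X vx rv \<Longrightarrow> gwalk Vs X vx rv u ds v \<Longrightarrow> v \<in> Vs"
  by (induction ds arbitrary: u) (auto simp: gwalk_Cons')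

lemma gwalk_set: "gwalk Vs X vx rv u ds v \<Longrightarrow> set ds \<subseteq> X"
  by (simp add: gwalk_def)

lemma gwalk_verts: "wfg Vs X vx rv \<Longrightarrow> gwalk Vs X vx rv u ds v \<Longrightarrow> set (gverts vx rv u ds) \<subseteq> Vs"
  by (induction ds arbitrary: u) (auto simp: gwalk_Cons')

lemma gwalk_last: "wfg Vs X vx rv \<Longrightarrow> gwalk Vs X vx rv u ds v \<Longrightarrow> last (gverts vx rv u ds) = v"
  by (induction ds arbitrary: u) (auto simp: gwalk_Cons' gverts_def)

lemma gverts_nth_last: "wfg Vs X vx rv \<Longrightarrow> gwalk Vs X vx rv u ds v \<Longrightarrow> gverts vx rv u ds ! length ds = v"
proof -
  have "gverts vx rv u ds \<noteq> []" by (simp add: gverts_def)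
  then have "last (gverts vx rv u ds) = gverts vx rv u ds ! length ds"
    by (simp add: last_conv_nth)
  then show "wfg Vs X vx rv \<Longrightarrow> gwalk Vs X vx rv u ds v \<Longrightarrow> gverts vx rv u ds ! length ds = v"
    using gwalk_last[of Vs X vx rv u ds v] by simp
qed

lemma gwalk_mono: "gwalk Vs X vx rv u ds v \<Longrightarrow> X \<subseteq> Y \<Longrightarrow> gwalk Vs Y vx rv u ds v"
  by (auto simp: gwalk_def)

lemma gwalk_snoc:
  assumes "wfg Vs X vx rv" "gwalk Vs X vx rv u ds m" "d \<in> X" "vx d = m"
  shows "gwalk Vs X vx rv u (ds @ [d]) (vx (rv d))"
  using assms gwalk_end[OF assms(1,2)] gwalk_wfgD[OF assms(1,3)]
  by (auto simp: gwalk_append gwalk_Cons')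

lemma gwalk_rev:
  assumes "wfg Vs X vx rv" "\<forall>d\<in>X. rv d \<in> X \<and> rv (rv d) = d"
    and "gwalk Vs X vx rv u ds v"
  shows "gwalk Vs X vx rv v (rev (map rv ds)) u"
  using assms(3)
proof (induction ds arbitrary: u)
  case Nil
  then show ?case by simp
next
  case (Cons d ds)
  then have d: "d \<in> X" "vx d = u" "gwalk Vs X vx rv (vx (rv d)) ds v"
    by (auto simp: gwalk_Cons'[OF assms(1)])
  have "gwalk Vs X vx rv v (rev (map rv ds)) (vx (rv d))" using Cons.IH d by blast
  moreover have "gwalk Vs X vx rv (vx (rv d)) [rv d] u"
    using d assms(1,2) by (auto simp: gwalk_Cons' wfg_def)
  ultimately show ?case by (auto simp: gwalk_append[OF assms(1)])
qed

lemma gverts_drop: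
  "k \<le> length ds \<Longrightarrow> gverts vx rv (gverts vx rv u ds ! k) (drop k ds) = drop k (gverts vx rv u ds)"
proof (induction ds arbitrary: u k)
  case Nil
  then show ?case by simp
next
  case (Cons d ds)
  then show ?case by (cases k) auto
qed

lemma gwalk_drop:
  assumes "wfg Vs X vx rv" "gwalk Vs X vx rv u ds v" "k \<le> length ds"
  shows "gwalk Vs X vx rv (gverts vx rv u ds ! k) (drop k ds) v"
  using assms(2,3)
proof (induction ds arbitrary: u k)
  case Nil
  then show ?case by simp
next
  case (Cons d ds)
  then show ?case by (cases k) (auto simp: gwalk_Cons'[OF assms(1)])
qed

lemma gwalk_take:
  assumes "wfg Vs X vx rv" "gwalk Vs X vx rv u ds v" "k \<le> length ds"
  shows "gwalk Vs X vx rv u (take k ds) (gverts vx rv u ds ! k)"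
  using assms(2,3)
proof (induction ds arbitrary: u k)
  case Nil
  then show ?case by simp
next
  case (Cons d ds)
  then show ?case by (cases k) (auto simp: gwalk_Cons'[OF assms(1)])
qed

lemma gverts_take:
  "k \<le> length ds \<Longrightarrow> gverts vx rv u (take k ds) = take (Suc k) (gverts vx rv u ds)"
  by (simp add: gverts_def take_map)

lemma gverts_append: "gverts vx rv u (xs @ ys) = gverts vx rv u xs @ tl (gverts vx rv m ys)"
  by (simp add: gverts_def)

lemma gwalk_tails:
  assumes "wfg Vs X vx rv" "gwalk Vs X vx rv u ds v" "b \<in> set ds"
  shows "vx b \<in> set (gverts vx rv u ds) \<and> vx (rv b) \<in> set (gverts vx rv u ds)"
  using assms(2,3)
proof (induction ds arbitrary: u)
  case Nil
  then show ?case by simp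
next
  case (Cons d ds)
  then show ?case by (auto simp: gwalk_Cons'[OF assms(1)])
qed

lemma gpath_distinct_edges:
  assumes "wfg Vs X vx rv" "gwalk Vs X vx rv u ds v" "distinct (gverts vx rv u ds)"
  shows "distinct (map (edge rv) ds)"
  using assms(2,3)
proof (induction ds arbitrary: u)
  case Nil
  then show ?case by simp
next
  case (Cons d ds)
  then have d: "d \<in> X" "vx d = u" "gwalk Vs X vx rv (vx (rv d)) ds v"
    and dis: "u \<notin> set (gverts vx rv (vx (rv d)) ds)" "distinct (gverts vx rv (vx (rv d)) ds)"
    by (auto simp: gwalk_Cons'[OF assms(1)])
  have "edge rv d \<notin> edge rv ` set ds"
  proof
    assume "edge rv d \<in> edge rv ` set ds"
    then obtain b where b: "b \<in> set ds" "edge rv d = edge rv b" by auto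
    then have "d = b \<or> d = rv b" by (auto simp: edge_def doubleton_eq_iff)
    then show False using gwalk_tails[OF assms(1) d(3) b(1)] d dis by auto
  qed
  then show ?case using Cons.IH d dis by auto
qed

lemma gwalk_simplify:
  assumes "wfg Vs X vx rv" "gwalk Vs X vx rv u ds v"
  shows "\<exists>ds'. gpath Vs X vx rv u ds' v \<and> set ds' \<subseteq> set ds \<and>
     (\<forall>w. (\<forall>d\<in>set ds. 0 \<le> w d) \<longrightarrow> len w ds' \<le> len w ds)"
  using assms(2)
proof (induction ds arbitrary: u)
  case Nil
  then show ?case by (auto simp: gpath_def)
next
  case (Cons d ds)
  then have d: "d \<in> X" "vx d = u" "gwalk Vs X vx rv (vx (rv d)) ds v" "u \<in> Vs"
    by (auto simp: gwalk_Cons'[OF assms(1)])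
  obtain ds' where ds': "gpath Vs X vx rv (vx (rv d)) ds' v" "set ds' \<subseteq> set ds"
     "\<forall>w. (\<forall>d\<in>set ds. 0 \<le> w d) \<longrightarrow> len w ds' \<le> len w ds"
    using Cons.IH d by blast
  show ?case
  proof (cases "u \<in> set (gverts vx rv (vx (rv d)) ds')")
    case False
    have "gpath Vs X vx rv u (d#ds') v"
      using False ds'(1) d by (auto simp: gpath_def gwalk_Cons'[OF assms(1)])
    moreover have "set (d#ds') \<subseteq> set (d#ds)" using ds'(2) by auto
    moreover have "len w (d#ds') \<le> len w (d#ds)" if "\<forall>x\<in>set (d#ds). 0 \<le> w x" for w
      using ds'(3) that by (auto simp: len_def)
    ultimately show ?thesis by blast
  next
    case True
    then obtain k where k: "k < Suc (length ds')" "gverts vx rv (vx (rv d)) ds' ! k = u"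
      by (metis in_set_conv_nth gverts_length)
    have w: "gwalk Vs X vx rv u (drop k ds') v"
      using gwalk_drop[OF assms(1), of "vx (rv d)" ds' v k] ds'(1) k by (auto simp: gpath_def)
    have dd: "distinct (gverts vx rv u (drop k ds'))"
      using gverts_drop[of k ds' vx rv "vx (rv d)"] ds'(1) k by (auto simp: gpath_def)
    have "len w (drop k ds') \<le> len w (d#ds)" if "\<forall>x\<in>set (d#ds). 0 \<le> w x" for w
    proof -
      have "len w ds' = len w (take k ds') + len w (drop k ds')"
        by (metis len_def map_append sum_list_append append_take_drop_id)
      moreover have "0 \<le> len w (take k ds')" unfolding len_def
        using ds'(2) that by (intro sum_list_nonneg) (auto dest: in_set_takeD)
      moreover have "len w ds' \<le> len w ds" using ds'(3) that by auto
      ultimately show ?thesis using that by (auto simp: len_def)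
    qed
    then show ?thesis using w dd ds'(2) by (auto simp: gpath_def dest: in_set_dropD)
  qed
qed

lemma cut_lemma:
  assumes wf: "wfg Vs X vx rv" and cl: "\<forall>d\<in>X. rv d \<in> X \<and> rv (rv d) = d"
    and ac: "gacyclic Vs X vx rv" and d0: "d0 \<in> X"
  shows "\<not> gwalk Vs (X - edge rv d0) vx rv (vx d0) ds (vx (rv d0))"
proof
  assume H: "gwalk Vs (X - edge rv d0) vx rv (vx d0) ds (vx (rv d0))"
  have wf0: "wfg Vs (X - edge rv d0) vx rv" using wf by (auto simp: wfg_def)
  obtain p where p: "gpath Vs (X - edge rv d0) vx rv (vx d0) p (vx (rv d0))"
    using gwalk_simplify[OF wf0 H] by blast
  have de: "distinct (map (edge rv) p)"
    using gpath_distinct_edges[OF wf0] p by (auto simp: gpath_def)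
  have pw: "gwalk Vs (X - edge rv d0) vx rv (vx d0) p (vx (rv d0))" using p by (simp add: gpath_def)
  have pX: "set p \<subseteq> X - edge rv d0" using gwalk_set[OF pw] .
  have "gwalk Vs X vx rv (vx d0) p (vx (rv d0))"
    using gwalk_mono[OF pw] by blast
  moreover have "gwalk Vs X vx rv (vx (rv d0)) [rv d0] (vx d0)"
  proof -
    have a: "rv d0 \<in> X" "rv (rv d0) = d0" using cl d0 by auto
    have "vx (rv d0) \<in> Vs" "vx d0 \<in> Vs" using wf d0 unfolding wfg_def by auto
    then show ?thesis using a gwalk_Cons'[OF wf, of "vx (rv d0)" "rv d0" "[]" "vx d0"] by simp
  qed
  ultimately have cw: "gwalk Vs X vx rv (vx d0) (p @ [rv d0]) (vx d0)"
    using gwalk_append[OF wf] by blast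
  have e: "edge rv (rv d0) = edge rv d0" using cl d0 by (auto simp: edge_def)
  have "edge rv d0 \<notin> edge rv ` set p"
  proof
    assume "edge rv d0 \<in> edge rv ` set p"
    then obtain b where b: "b \<in> set p" "edge rv d0 = edge rv b" by auto
    then have "b \<in> edge rv d0" by (simp add: edge_def)
    then show False using pX b(1) by blast
  qed
  then have "distinct (map (edge rv) (p @ [rv d0]))" using de e by auto
  then show False using ac cw unfolding gacyclic_def by blast
qed



lemma orb_period:
  assumes "bij_betw f D D" "finite D" "y \<in> D"
  shows "\<exists>n>0. (f ^^ n) y = y"
proof -
  define g where "g = (\<lambda>n. (f ^^ n) y)"
  have gD: "g ` {0..card D} \<subseteq> D" using bij_betw_funpow[OF assms(1)] assms(3)
    by (auto simp: g_def bij_betw_def)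
  have "card (g ` {0..card D}) \<le> card D" using card_mono[OF assms(2) gD] .
  then have "card (g ` {0..card D}) < card {0..card D}" by simp
  then have "\<not> inj_on g {0..card D}" using pigeonhole by blast
  then obtain i j where ij: "i \<le> card D" "j \<le> card D" "i \<noteq> j" "g i = g j"
    unfolding inj_on_def by auto
  then obtain a b where ab: "a < b" "g a = g b" by (metis nat_neq_iff)
  have inj: "inj_on (f ^^ a) D" using bij_betw_funpow[OF assms(1)] by (auto simp: bij_betw_def)
  have bD: "(f ^^ (b - a)) y \<in> D" using bij_betw_funpow[OF assms(1)] assms(3)
    by (auto simp: bij_betw_def)
  have "(f ^^ a) ((f ^^ (b - a)) y) = (f ^^ b) y"
    using ab(1) by (metis funpow_add comp_apply le_add_diff_inverse less_imp_le)
  then have "(f ^^ a) ((f ^^ (b - a)) y) = (f ^^ a) y" using ab(2) by (simp add: g_def)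
  then have "(f ^^ (b - a)) y = y" using inj bD assms(3) by (auto simp: inj_on_def)
  then show ?thesis using ab(1) by (intro exI[of _ "b - a"]) auto
qed

lemma orb_step:
  assumes "bij_betw f D D" "finite D" "y \<in> D"
  shows "orb f (f y) = orb f y"
proof -
  obtain n where n: "n > 0" "(f ^^ n) y = y" using orb_period[OF assms] by blast
  have A: "(f ^^ m) (f y) = (f ^^ Suc m) y" for m by (simp add: funpow_swap1)
  have B: "(f ^^ m) y = (f ^^ (m + n - 1)) (f y)" for m
  proof -
    have "(f ^^ (m + n - 1)) (f y) = (f ^^ Suc (m + n - 1)) y" by (simp add: funpow_swap1)
    also have "Suc (m + n - 1) = m + n" using n by simp
    also have "(f ^^ (m + n)) y = (f ^^ m) y" using n by (simp add: funpow_add)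
    finally show ?thesis by simp
  qed
  show ?thesis
  proof (intro set_eqI iffI)
    fix z assume "z \<in> orb f (f y)"
    then obtain m where "z = (f ^^ m) (f y)" by (auto simp: orb_def)
    then have "z = (f ^^ Suc m) y" using A by simp
    then show "z \<in> orb f y" unfolding orb_def by blast
  next
    fix z assume "z \<in> orb f y"
    then obtain m where "z = (f ^^ m) y" by (auto simp: orb_def)
    then have "z = (f ^^ (m + n - 1)) (f y)" using B by simp
    then show "z \<in> orb f (f y)" unfolding orb_def by blast
  qed
qed

definition chi :: "('d \<Rightarrow> 'd) \<Rightarrow> 'd list \<Rightarrow> 'd \<Rightarrow> bool" where
  "chi rv c d = odd (length (filter (\<lambda>x. x \<in> edge rv d) c))"

definition cnd :: "('d \<Rightarrow> 'd) \<Rightarrow> ('d \<Rightarrow> 'd) \<Rightarrow> 'd set set \<Rightarrow> 'd \<Rightarrow> bool" where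
  "cnd rv sc S d = ((face rv sc d \<in> S) \<noteq> (face rv sc (rv d) \<in> S))"

lemma oddf_xor:
  "odd (length (filter (\<lambda>y. P y \<noteq> Q y) l)) = (odd (length (filter P l)) \<noteq> odd (length (filter Q l)))"
  by (induction l) auto

lemma chi_Cons: "chi rv (d#c) y = ((d \<in> edge rv y) \<noteq> chi rv c y)"
  by (simp add: chi_def)
lemma chi_Nil[simp]: "chi rv [] y = False"
  by (simp add: chi_def)

lemma sdiff_assoc: "sdiff (sdiff A B) C = sdiff A (sdiff B C)"
  by (auto simp: sdiff_def)
lemma sdiff_comm: "sdiff A B = sdiff B A"
  by (auto simp: sdiff_def)
lemma sdiff_empty[simp]: "sdiff {} A = A" "sdiff A {} = A"
  by (auto simp: sdiff_def)
lemma sdiff_self[simp]: "sdiff A A = {}"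
  by (auto simp: sdiff_def)
lemma sdiff_cancel: "sdiff A (sdiff A B) = B"
  by (auto simp: sdiff_def)
lemma sdiff_mem: "x \<in> sdiff A B \<longleftrightarrow> (x \<in> A) \<noteq> (x \<in> B)"
  by (auto simp: sdiff_def)

lemma wsig_fold: "fold (\<lambda>d h. sdiff h (sig rv es \<alpha> d)) c h = sdiff h (wsig rv es \<alpha> c)"
proof (induction c arbitrary: h)
  case Nil
  then show ?case by (simp add: wsig_def)
next
  case (Cons d c)
  have "wsig rv es \<alpha> (d#c) = sdiff (sig rv es \<alpha> d) (wsig rv es \<alpha> c)"
    unfolding wsig_def using Cons.IH[of "sdiff {} (sig rv es \<alpha> d)"] by (simp add: wsig_def)
  then show ?case using Cons.IH by (simp add: sdiff_assoc)
qed

lemma wsig_Nil[simp]: "wsig rv es \<alpha> [] = {}"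
  by (simp add: wsig_def)
lemma wsig_Cons: "wsig rv es \<alpha> (d#c) = sdiff (sig rv es \<alpha> d) (wsig rv es \<alpha> c)"
  using wsig_fold[of rv es \<alpha> c "sdiff {} (sig rv es \<alpha> d)"] by (simp add: wsig_def)
lemma wsig_append: "wsig rv es \<alpha> (a @ b) = sdiff (wsig rv es \<alpha> a) (wsig rv es \<alpha> b)"
  by (induction a) (auto simp: wsig_Cons sdiff_assoc)

lemma wsig_mem: "i \<in> wsig rv es \<alpha> c \<longleftrightarrow> odd (length (filter (\<lambda>d. i \<in> sig rv es \<alpha> d) c))"
  by (induction c) (auto simp: wsig_Cons sdiff_mem)

lemma sig_sub: "sig rv es \<alpha> d \<subseteq> {..<length es}"
  by (auto simp: sig_def)
lemma wsig_sub: "wsig rv es \<alpha> c \<subseteq> {..<length es}"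
  by (induction c) (auto simp: wsig_Cons sdiff_def sig_def)

locale sg =
  fixes D :: "'d set" and rv sc :: "'d \<Rightarrow> 'd" and Bd :: "'d set set" and w :: "'d \<Rightarrow> real"
  assumes surf: "surface_graph D rv sc Bd w"
begin

lemma finD: "finite D" using surf by (simp add: surface_graph_def)
lemma rvD: "d \<in> D \<Longrightarrow> rv d \<in> D" using surf by (simp add: surface_graph_def)
lemma rvne: "d \<in> D \<Longrightarrow> rv d \<noteq> d" using surf by (simp add: surface_graph_def)
lemma rvrv[simp]: "d \<in> D \<Longrightarrow> rv (rv d) = d" using surf by (simp add: surface_graph_def)
lemma scbij: "bij_betw sc D D" using surf by (simp add: surface_graph_def)
lemma wnn: "d \<in> D \<Longrightarrow> 0 \<le> w d" using surf by (simp add: surface_graph_def)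
lemma wrv: "d \<in> D \<Longrightarrow> w (rv d) = w d" using surf by (simp add: surface_graph_def)
lemma BdF: "Bd \<subseteq> Faces D rv sc" using surf by (simp add: surface_graph_def)

lemma edge_rv[simp]: "d \<in> D \<Longrightarrow> edge rv (rv d) = edge rv d"
  by (auto simp: edge_def)
lemma in_edge: "x \<in> edge rv d \<longleftrightarrow> x = d \<or> x = rv d"
  by (auto simp: edge_def)
lemma edge_eq: "edge rv d = edge rv d' \<Longrightarrow> d' = d \<or> d' = rv d"
  by (auto simp: edge_def doubleton_eq_iff)
lemma in_edge_sym: "x \<in> D \<Longrightarrow> y \<in> D \<Longrightarrow> x \<in> edge rv y \<longleftrightarrow> y \<in> edge rv x"
  by (auto simp: edge_def)
lemma in_edge_eq: "d \<in> D \<Longrightarrow> x \<in> edge rv d \<Longrightarrow> edge rv x = edge rv d"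
  by (auto simp: edge_def)

lemma chi_rv: "d \<in> D \<Longrightarrow> chi rv c (rv d) = chi rv c d"
  by (simp add: chi_def)
lemma cnd_rv: "d \<in> D \<Longrightarrow> cnd rv sc S (rv d) = cnd rv sc S d"
  by (auto simp: cnd_def)

lemma rvbij: "bij_betw rv D D"
  by (rule bij_betw_byWitness[of _ rv]) (auto simp: rvD)

lemma vert_sc: "d \<in> D \<Longrightarrow> vert sc (sc d) = vert sc d"
  unfolding vert_def using orb_step[OF scbij finD] by blast

lemma face_rv_sc: "d \<in> D \<Longrightarrow> face rv sc (rv d) = face rv sc (sc d)"
proof -
  assume d: "d \<in> D"
  have b: "bij_betw (sc \<circ> rv) D D" using bij_betw_trans[OF rvbij scbij] .
  have "orb (sc \<circ> rv) ((sc \<circ> rv) (rv d)) = orb (sc \<circ> rv) (rv d)"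
    using orb_step[OF b finD] rvD[OF d] by blast
  then show ?thesis using d by (simp add: face_def)
qed

lemma vertV: "d \<in> D \<Longrightarrow> vert sc d \<in> Verts D sc" by (simp add: Verts_def)
lemma faceF: "d \<in> D \<Longrightarrow> face rv sc d \<in> Faces D rv sc" by (simp add: Faces_def)

lemma wfgV: "X \<subseteq> D \<Longrightarrow> wfg (Verts D sc) X (vert sc) rv"
  by (auto simp: wfg_def vertV rvD)
lemma wfgF: "X \<subseteq> D \<Longrightarrow> wfg (Faces D rv sc) X (face rv sc) rv"
  by (auto simp: wfg_def faceF rvD)

lemma pwalk_set: "pwalk D rv sc u c v \<Longrightarrow> set c \<subseteq> D"
  by (auto simp: pwalk_def gwalk_def)

lemma oddset_mem: "set c \<subseteq> D \<Longrightarrow> d \<in> D \<Longrightarrow> edge rv d \<in> oddset rv c \<longleftrightarrow> chi rv c d"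
proof
  assume c: "set c \<subseteq> D" and d: "d \<in> D" and "edge rv d \<in> oddset rv c"
  then obtain x where x: "edge rv d = edge rv x" "x \<in> set c" "odd (length (filter (\<lambda>y. y \<in> edge rv x) c))"
    by (auto simp: oddset_def)
  then show "chi rv c d" by (simp add: chi_def)
next
  assume c: "set c \<subseteq> D" and d: "d \<in> D" and "chi rv c d"
  then have "filter (\<lambda>y. y \<in> edge rv d) c \<noteq> []" by (auto simp: chi_def)
  then obtain x where x: "x \<in> set c" "x \<in> edge rv d" by (auto simp: filter_empty_conv)
  then have "edge rv x = edge rv d" using d by (rule_tac in_edge_eq) auto
  then have "odd (length (filter (\<lambda>y. y \<in> edge rv x) c))" using \<open>chi rv c d\<close> by (simp add: chi_def)
  then show "edge rv d \<in> oddset rv c" using x \<open>edge rv x = edge rv d\<close> unfolding oddset_def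
    by (metis (mono_tags, lifting) mem_Collect_eq)
qed

lemma oddset_form: "set c \<subseteq> D \<Longrightarrow> e \<in> oddset rv c \<Longrightarrow> \<exists>d\<in>D. e = edge rv d"
  by (auto simp: oddset_def)

lemma bdry_mem: "d \<in> D \<Longrightarrow> edge rv d \<in> bdry D rv sc S \<longleftrightarrow> cnd rv sc S d"
proof
  assume d: "d \<in> D" and "edge rv d \<in> bdry D rv sc S"
  then obtain x where x: "edge rv d = edge rv x" "x \<in> D" "cnd rv sc S x"
    by (auto simp: bdry_def cnd_def)
  then have "x = d \<or> x = rv d" using edge_eq[of x d] by (metis edge_eq)
  then show "cnd rv sc S d" using x d cnd_rv by auto
next
  assume "d \<in> D" "cnd rv sc S d"
  then show "edge rv d \<in> bdry D rv sc S" by (auto simp: bdry_def cnd_def)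
qed

lemma homologous_iff:
  assumes "set c1 \<subseteq> D" "set c2 \<subseteq> D"
  shows "homologous D rv sc Bd c1 c2 \<longleftrightarrow>
    (\<exists>S. S \<subseteq> Faces D rv sc - Bd \<and> (\<forall>d\<in>D. (chi rv c1 d \<noteq> chi rv c2 d) = cnd rv sc S d))"
proof -
  have "sdiff (oddset rv c1) (oddset rv c2) = bdry D rv sc S \<longleftrightarrow>
        (\<forall>d\<in>D. (chi rv c1 d \<noteq> chi rv c2 d) = cnd rv sc S d)" for S
  proof
    assume H: "sdiff (oddset rv c1) (oddset rv c2) = bdry D rv sc S"
    show "\<forall>d\<in>D. (chi rv c1 d \<noteq> chi rv c2 d) = cnd rv sc S d"
    proof
      fix d assume d: "d \<in> D"
      have "edge rv d \<in> sdiff (oddset rv c1) (oddset rv c2) \<longleftrightarrow> edge rv d \<in> bdry D rv sc S"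
        using H by simp
      then show "(chi rv c1 d \<noteq> chi rv c2 d) = cnd rv sc S d"
        using d assms by (simp add: sdiff_mem oddset_mem bdry_mem)
    qed
  next
    assume H: "\<forall>d\<in>D. (chi rv c1 d \<noteq> chi rv c2 d) = cnd rv sc S d"
    show "sdiff (oddset rv c1) (oddset rv c2) = bdry D rv sc S"
    proof (rule set_eqI)
      fix e
      have "e \<in> sdiff (oddset rv c1) (oddset rv c2) \<Longrightarrow> \<exists>d\<in>D. e = edge rv d"
        using oddset_form assms by (auto simp: sdiff_def)
      moreover have "e \<in> bdry D rv sc S \<Longrightarrow> \<exists>d\<in>D. e = edge rv d"
        by (auto simp: bdry_def)
      moreover have "d \<in> D \<Longrightarrow> edge rv d \<in> sdiff (oddset rv c1) (oddset rv c2) \<longleftrightarrow> edge rv d \<in> bdry D rv sc S" for d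
        using H assms by (simp add: sdiff_mem oddset_mem bdry_mem)
      ultimately show "e \<in> sdiff (oddset rv c1) (oddset rv c2) \<longleftrightarrow> e \<in> bdry D rv sc S" by blast
    qed
  qed
  then show ?thesis unfolding homologous_def by blast
qed

lemma wsig_bit:
  assumes c: "set c \<subseteq> D" and al: "\<forall>i<length es. set (\<alpha> i) \<subseteq> D"
  shows "i \<in> wsig rv es \<alpha> c \<longleftrightarrow> i < length es \<and> odd (length (filter (chi rv c) (\<alpha> i)))"
proof (cases "i < length es")
  case False
  then show ?thesis using wsig_sub[of rv es \<alpha> c] by auto
next
  case True
  have "odd (length (filter (\<lambda>d. i \<in> sig rv es \<alpha> d) c)) = odd (length (filter (chi rv c) (\<alpha> i)))"
    using c
  proof (induction c)
    case Nil
    then show ?case by (simp add: chi_def)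
  next
    case (Cons d c)
    have dD: "d \<in> D" using Cons.prems by auto
    have "filter (\<lambda>y. d \<in> edge rv y) (\<alpha> i) = filter (\<lambda>y. y \<in> edge rv d) (\<alpha> i)"
    proof (intro filter_cong refl)
      fix x assume "x \<in> set (\<alpha> i)"
      then have "x \<in> D" using al True by auto
      then show "(d \<in> edge rv x) = (x \<in> edge rv d)" using in_edge_sym[OF dD] by blast
    qed
    then have "odd (length (filter (chi rv (d#c)) (\<alpha> i))) =
       (odd (length (filter (\<lambda>y. y \<in> edge rv d) (\<alpha> i))) \<noteq> odd (length (filter (chi rv c) (\<alpha> i))))"
      unfolding chi_Cons oddf_xor by simp
    then show ?case using Cons True by (simp add: sig_def)
  qed
  then show ?thesis using True by (simp add: wsig_mem)
qed

lemma dual_parity: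
  assumes "X \<subseteq> D" "gwalk (Faces D rv sc) X (face rv sc) rv f ds f'"
  shows "odd (length (filter (cnd rv sc S) ds)) = ((f \<in> S) \<noteq> (f' \<in> S))"
  using assms(2)
proof (induction ds arbitrary: f)
  case Nil
  then show ?case by simp
next
  case (Cons d ds)
  then have "d \<in> X" "face rv sc d = f" "gwalk (Faces D rv sc) X (face rv sc) rv (face rv sc (rv d)) ds f'"
    by (auto simp: gwalk_Cons'[OF wfgF[OF assms(1)]])
  with Cons.IH show ?case by (auto simp: cnd_def)
qed

end



lemma card_xor:
  assumes "finite U"
  shows "odd (card {x\<in>U. P x \<noteq> Q x}) = (odd (card {x\<in>U. P x}) \<noteq> odd (card {x\<in>U. Q x}))"
proof -
  have e1: "{x\<in>U. P x} = {x\<in>U. P x \<and> Q x} \<union> {x\<in>U. P x \<and> \<not> Q x}" by auto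
  have e2: "{x\<in>U. Q x} = {x\<in>U. P x \<and> Q x} \<union> {x\<in>U. \<not> P x \<and> Q x}" by auto
  have e3: "{x\<in>U. P x \<noteq> Q x} = {x\<in>U. P x \<and> \<not> Q x} \<union> {x\<in>U. \<not> P x \<and> Q x}" by auto
  have c1: "card {x\<in>U. P x} = card {x\<in>U. P x \<and> Q x} + card {x\<in>U. P x \<and> \<not> Q x}"
    unfolding e1 using assms by (intro card_Un_disjoint) auto
  have c2: "card {x\<in>U. Q x} = card {x\<in>U. P x \<and> Q x} + card {x\<in>U. \<not> P x \<and> Q x}"
    unfolding e2 using assms by (intro card_Un_disjoint) auto
  have c3: "card {x\<in>U. P x \<noteq> Q x} = card {x\<in>U. P x \<and> \<not> Q x} + card {x\<in>U. \<not> P x \<and> Q x}"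
    unfolding e3 using assms by (intro card_Un_disjoint) auto
  show ?thesis using c1 c2 c3 by auto
qed

lemma invol_even:
  assumes "finite Y" "\<forall>x\<in>Y. r x \<in> Y \<and> r x \<noteq> x \<and> r (r x) = x"
  shows "even (card Y)"
  using assms
proof (induction "card Y" arbitrary: Y rule: less_induct)
  case less
  show ?case
  proof (cases "Y = {}")
    case True
    then show ?thesis by simp
  next
    case False
    then obtain x where x: "x \<in> Y" by auto
    define Y' where "Y' = Y - {x, r x}"
    have rx: "r x \<in> Y" "r x \<noteq> x" "r (r x) = x" using less.prems x by auto
    have cY: "card Y = card Y' + 2"
    proof -
      have "card Y' = card Y - card {x, r x}" unfolding Y'_def
        using less.prems(1) x rx by (intro card_Diff_subset) auto
      moreover have "card {x, r x} = 2" using rx by auto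
      moreover have "card {x, r x} \<le> card Y" using less.prems(1) x rx by (intro card_mono) auto
      ultimately show ?thesis by simp
    qed
    have "\<forall>y\<in>Y'. r y \<in> Y' \<and> r y \<noteq> y \<and> r (r y) = y"
    proof
      fix y assume y: "y \<in> Y'"
      then have yY: "y \<in> Y" "y \<noteq> x" "y \<noteq> r x" by (auto simp: Y'_def)
      then have "r y \<in> Y" "r y \<noteq> y" "r (r y) = y" using less.prems by auto
      moreover have "r y \<noteq> x" using yY rx \<open>r (r y) = y\<close> by metis
      moreover have "r y \<noteq> r x" using yY rx \<open>r (r y) = y\<close> by metis
      ultimately show "r y \<in> Y' \<and> r y \<noteq> y \<and> r (r y) = y" by (auto simp: Y'_def)
    qed
    moreover have "finite Y'" using less.prems(1) by (simp add: Y'_def)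
    ultimately have "even (card Y')" using less.hyps cY by simp
    then show ?thesis using cY by simp
  qed
qed

context sg
begin

definition cross :: "'d set set \<Rightarrow> ('d \<Rightarrow> bool) \<Rightarrow> nat" where
  "cross A Z = card {d\<in>D. vert sc d \<in> A \<and> vert sc (rv d) \<notin> A \<and> Z d}"

lemma cross_xor: "odd (cross A (\<lambda>d. P d \<noteq> Q d)) = (odd (cross A P) \<noteq> odd (cross A Q))"
proof -
  let ?U = "{d\<in>D. vert sc d \<in> A \<and> vert sc (rv d) \<notin> A}"
  have "finite ?U" using finD by simp
  from card_xor[OF this, of P Q] show ?thesis unfolding cross_def
    by (simp add: conj_assoc)
qed

lemma cross_edge:
  assumes d: "d \<in> D"
  shows "odd (cross A (\<lambda>x. d \<in> edge rv x)) = ((vert sc d \<in> A) \<noteq> (vert sc (rv d) \<in> A))"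
proof -
  have e: "x \<in> D \<Longrightarrow> d \<in> edge rv x \<longleftrightarrow> x = d \<or> x = rv d" for x
    using d by (auto simp: edge_def)
  have S: "{x\<in>D. vert sc x \<in> A \<and> vert sc (rv x) \<notin> A \<and> d \<in> edge rv x} =
        {x\<in>{d, rv d}. vert sc x \<in> A \<and> vert sc (rv x) \<notin> A}"
    using e d rvD by auto
  define K where "K = {x\<in>{d, rv d}. vert sc x \<in> A \<and> vert sc (rv x) \<notin> A}"
  have cK: "cross A (\<lambda>x. d \<in> edge rv x) = card K" unfolding cross_def S K_def ..
  have rr: "rv (rv d) = d" "rv d \<noteq> d" using d rvne by auto
  show ?thesis
  proof (cases "vert sc d \<in> A"; cases "vert sc (rv d) \<in> A")
    assume a: "vert sc d \<in> A" "vert sc (rv d) \<in> A"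
    then have "K = {}" using rr unfolding K_def by auto
    then show ?thesis using a cK by simp
  next
    assume a: "vert sc d \<in> A" "vert sc (rv d) \<notin> A"
    then have "K = {d}" using rr unfolding K_def by auto
    then show ?thesis using a cK by simp
  next
    assume a: "vert sc d \<notin> A" "vert sc (rv d) \<in> A"
    then have "K = {rv d}" using rr unfolding K_def by auto
    then show ?thesis using a cK by simp
  next
    assume a: "vert sc d \<notin> A" "vert sc (rv d) \<notin> A"
    then have "K = {}" using rr unfolding K_def by auto
    then show ?thesis using a cK by simp
  qed
qed

lemma cross_walk:
  assumes "pwalk D rv sc u c v"
  shows "odd (cross A (chi rv c)) = ((u \<in> A) \<noteq> (v \<in> A))"
  using assms unfolding pwalk_def
proof (induction c arbitrary: u)
  case Nil
  then show ?case by (simp add: cross_def)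
next
  case (Cons d c)
  then have d: "d \<in> D" "vert sc d = u" "gwalk (Verts D sc) D (vert sc) rv (vert sc (rv d)) c v"
    by (auto simp: gwalk_Cons'[OF wfgV[OF order_refl]])
  have "chi rv (d#c) = (\<lambda>x. (d \<in> edge rv x) \<noteq> chi rv c x)" by (simp add: chi_Cons fun_eq_iff)
  then have "odd (cross A (chi rv (d#c))) = (odd (cross A (\<lambda>x. d \<in> edge rv x)) \<noteq> odd (cross A (chi rv c)))"
    using cross_xor by simp
  moreover have "odd (cross A (\<lambda>x. d \<in> edge rv x)) = ((u \<in> A) \<noteq> (vert sc (rv d) \<in> A))"
    using cross_edge[OF d(1)] d(2) by simp
  moreover note Cons.IH[OF d(3)]
  ultimately show ?case by (cases "u \<in> A"; cases "v \<in> A"; cases "vert sc (rv d) \<in> A") simp_all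
qed

lemma cross_bdry: "even (cross A (cnd rv sc S))"
proof -
  define U where "U = {x\<in>D. vert sc x \<in> A}"
  define P where "P = (\<lambda>x. face rv sc x \<in> S)"
  have fU: "finite U" using finD by (simp add: U_def)
  have cndU: "x \<in> U \<Longrightarrow> cnd rv sc S x = (P x \<noteq> P (sc x))" for x
    by (simp add: U_def P_def cnd_def face_rv_sc)
  have scD: "x \<in> D \<Longrightarrow> sc x \<in> D" for x using scbij by (auto simp: bij_betw_def)
  have img: "sc ` {x\<in>U. P (sc x)} = {x\<in>U. P x}"
  proof (intro set_eqI iffI)
    fix y assume "y \<in> sc ` {x\<in>U. P (sc x)}"
    then show "y \<in> {x\<in>U. P x}" using scD vert_sc by (auto simp: U_def)
  next
    fix y assume y: "y \<in> {x\<in>U. P x}"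
    then have "y \<in> sc ` D" using scbij by (auto simp: bij_betw_def U_def)
    then obtain x where x: "x \<in> D" "y = sc x" by auto
    then show "y \<in> sc ` {x\<in>U. P (sc x)}" using y vert_sc by (auto simp: U_def)
  qed
  have inj: "inj_on sc {x\<in>U. P (sc x)}" using scbij
    by (auto simp: bij_betw_def U_def intro: inj_on_subset)
  have "card {x\<in>U. P (sc x)} = card {x\<in>U. P x}" using card_image[OF inj] img by simp
  moreover have "{x\<in>U. cnd rv sc S x} = {x\<in>U. P x \<noteq> P (sc x)}" using cndU by auto
  ultimately have ev1: "even (card {x\<in>U. cnd rv sc S x})"
    using card_xor[OF fU, of P "\<lambda>x. P (sc x)"] by simp
  have ev2: "even (card {x\<in>U. vert sc (rv x) \<in> A \<and> cnd rv sc S x})"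
  proof (rule invol_even[of _ rv])
    show "finite {x\<in>U. vert sc (rv x) \<in> A \<and> cnd rv sc S x}" using fU by simp
    show "\<forall>x\<in>{x\<in>U. vert sc (rv x) \<in> A \<and> cnd rv sc S x}. rv x \<in> {x\<in>U. vert sc (rv x) \<in> A \<and> cnd rv sc S x} \<and> rv x \<noteq> x \<and> rv (rv x) = x"
      using rvD rvne cnd_rv by (auto simp: U_def)
  qed
  have "{x\<in>U. cnd rv sc S x} = {x\<in>U. vert sc (rv x) \<in> A \<and> cnd rv sc S x} \<union> {x\<in>U. vert sc (rv x) \<notin> A \<and> cnd rv sc S x}"
    by auto
  then have "card {x\<in>U. cnd rv sc S x} = card {x\<in>U. vert sc (rv x) \<in> A \<and> cnd rv sc S x} + card {x\<in>U. vert sc (rv x) \<notin> A \<and> cnd rv sc S x}"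
    using fU by (subst card_Un_disjoint[symmetric]) auto
  moreover have "cross A (cnd rv sc S) = card {x\<in>U. vert sc (rv x) \<notin> A \<and> cnd rv sc S x}"
    unfolding cross_def U_def by (simp add: conj_assoc)
  ultimately show ?thesis using ev1 ev2 by simp
qed

end

locale tc = sg D rv sc Bd w
  for D :: "'d set" and rv sc :: "'d \<Rightarrow> 'd" and Bd :: "'d set set" and w :: "'d \<Rightarrow> real" +
  fixes T F :: "'d set set" and es :: "'d set list" and \<alpha> :: "nat \<Rightarrow> 'd list"
  assumes dec: "tree_coforest D rv sc Bd T F es \<alpha>"
begin

lemma TE: "T \<subseteq> Edges D rv" using dec by (simp add: tree_coforest_def)
lemma FE: "F \<subseteq> Edges D rv" using dec by (simp add: tree_coforest_def)
lemma acT: "gacyclic (Verts D sc) (\<Union>T) (vert sc) rv" using dec by (simp add: tree_coforest_def)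
lemma acF: "gacyclic (Faces D rv sc) (\<Union>F) (face rv sc) rv" using dec by (simp add: tree_coforest_def)
lemma uniqB: "f \<in> Faces D rv sc \<Longrightarrow> \<exists>!b. b \<in> Bd \<and> (\<exists>ds. gwalk (Faces D rv sc) (\<Union>F) (face rv sc) rv f ds b)"
  using dec by (simp add: tree_coforest_def)
lemma TF: "T \<inter> F = {}" using dec by (simp add: tree_coforest_def)
lemma esE: "set es = Edges D rv - T - F" using dec by (simp add: tree_coforest_def)
lemma alpha: "i < length es \<Longrightarrow>
        set (\<alpha> i) \<subseteq> \<Union>(insert (es ! i) F) \<and>
        (\<exists>d\<in>set (\<alpha> i). edge rv d = es ! i) \<and>
        distinct (map (edge rv) (\<alpha> i)) \<and>
        ((\<exists>f. \<alpha> i \<noteq> [] \<and> gwalk (Faces D rv sc) (\<Union>(insert (es ! i) F)) (face rv sc) rv f (\<alpha> i) f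
               \<and> distinct (map (face rv sc) (\<alpha> i))) \<or>
         (\<exists>b1 b2. b1 \<in> Bd \<and> b2 \<in> Bd \<and> b1 \<noteq> b2 \<and>
               gpath (Faces D rv sc) (\<Union>(insert (es ! i) F)) (face rv sc) rv b1 (\<alpha> i) b2))"
  using dec by (simp add: tree_coforest_def)

lemma Edges_form: "e \<in> Edges D rv \<Longrightarrow> \<exists>d\<in>D. e = edge rv d"
  by (auto simp: Edges_def)
lemma Edges_sub: "e \<in> Edges D rv \<Longrightarrow> e \<subseteq> D"
  by (auto simp: Edges_def edge_def rvD)
lemma Edges_cl: "e \<in> Edges D rv \<Longrightarrow> d \<in> e \<Longrightarrow> rv d \<in> e \<and> edge rv d = e"
  by (auto simp: Edges_def edge_def rvD)

lemma esEdges: "i < length es \<Longrightarrow> es ! i \<in> Edges D rv"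
  using esE nth_mem by blast

lemma alphaD: "i < length es \<Longrightarrow> set (\<alpha> i) \<subseteq> D"
  using alpha[of i] esEdges[of i] FE Edges_sub by blast

lemma alphaX: "i < length es \<Longrightarrow> \<Union>(insert (es ! i) F) \<subseteq> D"
  using esEdges[of i] FE Edges_sub by blast

lemma alpha_even:
  assumes S: "S \<subseteq> Faces D rv sc - Bd" and i: "i < length es"
  shows "even (length (filter (cnd rv sc S) (\<alpha> i)))"
proof -
  have X: "\<Union>(insert (es ! i) F) \<subseteq> D" using alphaX[OF i] .
  from alpha[OF i] consider
    (cyc) f where "gwalk (Faces D rv sc) (\<Union>(insert (es ! i) F)) (face rv sc) rv f (\<alpha> i) f"
    | (pth) b1 b2 where "b1 \<in> Bd" "b2 \<in> Bd" "gpath (Faces D rv sc) (\<Union>(insert (es ! i) F)) (face rv sc) rv b1 (\<alpha> i) b2"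
    by blast
  then show ?thesis
  proof cases
    case cyc
    then show ?thesis using dual_parity[OF X] by blast
  next
    case pth
    then have "b1 \<notin> S" "b2 \<notin> S" using S by auto
    then show ?thesis using dual_parity[OF X] pth(3) unfolding gpath_def by blast
  qed
qed

lemma B1:
  assumes "homologous D rv sc Bd c1 c2" "set c1 \<subseteq> D" "set c2 \<subseteq> D"
  shows "wsig rv es \<alpha> c1 = wsig rv es \<alpha> c2"
proof -
  obtain S where S: "S \<subseteq> Faces D rv sc - Bd" "\<forall>d\<in>D. (chi rv c1 d \<noteq> chi rv c2 d) = cnd rv sc S d"
    using assms(1) homologous_iff[OF assms(2,3)] by blast
  have al: "\<forall>i<length es. set (\<alpha> i) \<subseteq> D" using alphaD by blast
  show ?thesis
  proof (rule set_eqI)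
    fix i
    show "i \<in> wsig rv es \<alpha> c1 \<longleftrightarrow> i \<in> wsig rv es \<alpha> c2"
    proof (cases "i < length es")
      case False
      then have "i \<notin> wsig rv es \<alpha> c1" "i \<notin> wsig rv es \<alpha> c2"
        using wsig_sub[of rv es \<alpha>] by (meson lessThan_iff subsetD)+
      then show ?thesis by simp
    next
      case True
      have "filter (cnd rv sc S) (\<alpha> i) = filter (\<lambda>d. chi rv c1 d \<noteq> chi rv c2 d) (\<alpha> i)"
      proof (intro filter_cong refl)
        fix x assume "x \<in> set (\<alpha> i)"
        then have "x \<in> D" using alphaD[OF True] by blast
        then show "cnd rv sc S x = (chi rv c1 x \<noteq> chi rv c2 x)" using S(2) by simp
      qed
      then have "odd (length (filter (chi rv c1) (\<alpha> i))) = odd (length (filter (chi rv c2) (\<alpha> i)))"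
        using alpha_even[OF S(1) True] oddf_xor[of "chi rv c1" "chi rv c2" "\<alpha> i"] by simp
      then show ?thesis using wsig_bit[OF assms(2) al] wsig_bit[OF assms(3) al] True by simp
    qed
  qed
qed

end



lemma filter_le1:
  assumes "distinct (map f l)" "\<forall>x\<in>set l. P x \<longrightarrow> f x = e"
  shows "length (filter P l) \<le> 1"
proof -
  have d: "distinct (map f (filter P l))" using assms(1) by (simp add: distinct_map_filter)
  have "set (map f (filter P l)) \<subseteq> {e}" using assms(2) by auto
  then have "card (set (map f (filter P l))) \<le> card {e}" by (intro card_mono) auto
  then have "card (set (map f (filter P l))) \<le> 1" by simp
  then show ?thesis using distinct_card[OF d] by simp
qed

context tc
begin

lemma XFD: "\<Union>F \<subseteq> D" using FE Edges_sub by blast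
lemma XFcl: "d \<in> \<Union>F \<Longrightarrow> rv d \<in> \<Union>F" using FE Edges_cl by blast
lemma XFedge: "d \<in> \<Union>F \<Longrightarrow> edge rv d \<in> F" using FE Edges_cl by blast
lemma XTD: "\<Union>T \<subseteq> D" using TE Edges_sub by blast
lemma XTcl: "d \<in> \<Union>T \<Longrightarrow> rv d \<in> \<Union>T" using TE Edges_cl by blast

lemma side:
  assumes d1: "d1 \<in> \<Union>F"
  defines "A \<equiv> {g. \<exists>ds. gwalk (Faces D rv sc) (\<Union>F - edge rv d1) (face rv sc) rv (face rv sc d1) ds g}"
  shows "A \<subseteq> Faces D rv sc" "\<forall>d\<in>\<Union>F. cnd rv sc A d \<longleftrightarrow> edge rv d = edge rv d1"
proof -
  let ?X0 = "\<Union>F - edge rv d1"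
  have X0D: "?X0 \<subseteq> D" using XFD by blast
  have wf0: "wfg (Faces D rv sc) ?X0 (face rv sc) rv" using wfgF[OF X0D] .
  have wfF: "wfg (Faces D rv sc) (\<Union>F) (face rv sc) rv" using wfgF[OF XFD] .
  have clF: "\<forall>d\<in>\<Union>F. rv d \<in> \<Union>F \<and> rv (rv d) = d" using XFcl XFD by auto
  have d1D: "d1 \<in> D" using d1 XFD by blast
  show "A \<subseteq> Faces D rv sc" unfolding A_def using gwalk_end[OF wf0] by blast
  have notin: "face rv sc (rv d1) \<notin> A"
    unfolding A_def using cut_lemma[OF wfF clF acF d1] by blast
  have in1: "face rv sc d1 \<in> A" unfolding A_def using faceF[OF d1D]
    by (intro CollectI exI[of _ "[]"]) simp
  have ext: "face rv sc (rv d) \<in> A" if H: "face rv sc d \<in> A" "d \<in> ?X0" for d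
  proof -
    obtain ds where "gwalk (Faces D rv sc) ?X0 (face rv sc) rv (face rv sc d1) ds (face rv sc d)"
      using H(1) unfolding A_def by blast
    from gwalk_snoc[OF wf0 this H(2) refl] show ?thesis unfolding A_def by blast
  qed
  show "\<forall>d\<in>\<Union>F. cnd rv sc A d \<longleftrightarrow> edge rv d = edge rv d1"
  proof
    fix d assume d: "d \<in> \<Union>F"
    then have dD: "d \<in> D" using XFD by blast
    show "cnd rv sc A d \<longleftrightarrow> edge rv d = edge rv d1"
    proof (cases "d \<in> edge rv d1")
      case True
      then have "d = d1 \<or> d = rv d1" by (simp add: in_edge)
      moreover have "edge rv d = edge rv d1" using True in_edge_eq[OF d1D] by blast
      ultimately show ?thesis using notin in1 d1D by (auto simp: cnd_def)
    next
      case False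
      then have "rv d \<notin> edge rv d1" using dD d1D rvrv[OF dD] by (auto simp: in_edge) (metis rvrv)
      then have "rv d \<in> ?X0" "d \<in> ?X0" using False d XFcl by auto
      then have "face rv sc d \<in> A \<longleftrightarrow> face rv sc (rv d) \<in> A" using ext[of d] ext[of "rv d"] dD by auto
      moreover have "edge rv d \<noteq> edge rv d1" using False by (metis edge_def insertI1)
      ultimately show ?thesis by (simp add: cnd_def)
    qed
  qed
qed

lemma Sf:
  assumes f: "f \<in> F"
  shows "\<exists>Sf. Sf \<subseteq> Faces D rv sc - Bd \<and> (\<forall>d\<in>\<Union>F. cnd rv sc Sf d \<longleftrightarrow> edge rv d = f)"
proof -
  obtain d0 where d0: "d0 \<in> D" "f = edge rv d0" using FE f Edges_form by blast
  have d0F: "d0 \<in> \<Union>F" using d0 f by (auto simp: edge_def)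
  have rd0F: "rv d0 \<in> \<Union>F" using XFcl[OF d0F] .
  have er: "edge rv (rv d0) = edge rv d0" using d0 by simp
  let ?X0 = "\<Union>F - edge rv d0"
  define A0 where "A0 = {g. \<exists>ds. gwalk (Faces D rv sc) ?X0 (face rv sc) rv (face rv sc d0) ds g}"
  define A1 where "A1 = {g. \<exists>ds. gwalk (Faces D rv sc) ?X0 (face rv sc) rv (face rv sc (rv d0)) ds g}"
  have s0: "A0 \<subseteq> Faces D rv sc" "\<forall>d\<in>\<Union>F. cnd rv sc A0 d \<longleftrightarrow> edge rv d = f"
    using side[OF d0F] d0 unfolding A0_def by auto
  have s1: "A1 \<subseteq> Faces D rv sc" "\<forall>d\<in>\<Union>F. cnd rv sc A1 d \<longleftrightarrow> edge rv d = f"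
    using side[OF rd0F] d0 er unfolding A1_def by auto
  have X0D: "?X0 \<subseteq> D" using XFD by blast
  have wf0: "wfg (Faces D rv sc) ?X0 (face rv sc) rv" using wfgF[OF X0D] .
  have wfF: "wfg (Faces D rv sc) (\<Union>F) (face rv sc) rv" using wfgF[OF XFD] .
  have clF: "\<forall>d\<in>\<Union>F. rv d \<in> \<Union>F \<and> rv (rv d) = d" using XFcl XFD by auto
  have cl0: "\<forall>d\<in>?X0. rv d \<in> ?X0 \<and> rv (rv d) = d"
  proof
    fix d assume d: "d \<in> ?X0"
    then have dD: "d \<in> D" using XFD by blast
    have "rv d \<notin> edge rv d0" using d dD d0 rvrv[OF dD] by (auto simp: in_edge) (metis rvrv)
    then show "rv d \<in> ?X0 \<and> rv (rv d) = d" using d dD XFcl by auto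
  qed
  have "A0 \<inter> Bd = {} \<or> A1 \<inter> Bd = {}"
  proof (rule ccontr)
    assume "\<not> (A0 \<inter> Bd = {} \<or> A1 \<inter> Bd = {})"
    then obtain b0 b1 where b0: "b0 \<in> A0" "b0 \<in> Bd" and b1: "b1 \<in> A1" "b1 \<in> Bd" by blast
    obtain ds0 where ds0: "gwalk (Faces D rv sc) ?X0 (face rv sc) rv (face rv sc d0) ds0 b0"
      using b0 unfolding A0_def by blast
    obtain ds1 where ds1: "gwalk (Faces D rv sc) ?X0 (face rv sc) rv (face rv sc (rv d0)) ds1 b1"
      using b1 unfolding A1_def by blast
    have w0: "gwalk (Faces D rv sc) (\<Union>F) (face rv sc) rv (face rv sc d0) ds0 b0"
      using gwalk_mono[OF ds0] by blast
    have w1': "gwalk (Faces D rv sc) (\<Union>F) (face rv sc) rv (face rv sc (rv d0)) ds1 b1"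
      using gwalk_mono[OF ds1] by blast
    have w1: "gwalk (Faces D rv sc) (\<Union>F) (face rv sc) rv (face rv sc d0) (d0 # ds1) b1"
      using w1' d0F faceF[OF d0(1)] by (simp add: gwalk_Cons'[OF wfF])
    have "b0 = b1" using uniqB[OF faceF[OF d0(1)]] w0 w1 b0(2) b1(2) by blast
    have r1: "gwalk (Faces D rv sc) ?X0 (face rv sc) rv b1 (rev (map rv ds1)) (face rv sc (rv d0))"
      using gwalk_rev[OF wf0 cl0 ds1] .
    have "gwalk (Faces D rv sc) ?X0 (face rv sc) rv (face rv sc d0) (ds0 @ rev (map rv ds1)) (face rv sc (rv d0))"
      using ds0 r1 \<open>b0 = b1\<close> gwalk_append[OF wf0] by blast
    then show False using cut_lemma[OF wfF clF acF d0F] by blast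
  qed
  then show ?thesis
  proof
    assume "A0 \<inter> Bd = {}"
    then have "A0 \<subseteq> Faces D rv sc - Bd" using s0(1) by blast
    then show ?thesis using s0(2) by blast
  next
    assume "A1 \<inter> Bd = {}"
    then have "A1 \<subseteq> Faces D rv sc - Bd" using s1(1) by blast
    then show ?thesis using s1(2) by blast
  qed
qed

lemma cnd_sdiff: "cnd rv sc (sdiff S1 S2) d = (cnd rv sc S1 d \<noteq> cnd rv sc S2 d)"
  by (auto simp: cnd_def sdiff_mem)

lemma S_Fz:
  assumes "finite Fz" "Fz \<subseteq> F"
  shows "\<exists>S. S \<subseteq> Faces D rv sc - Bd \<and> (\<forall>d\<in>\<Union>F. cnd rv sc S d \<longleftrightarrow> edge rv d \<in> Fz)"
  using assms
proof (induction Fz rule: finite_induct)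
  case empty
  then show ?case by (intro exI[of _ "{}"]) (simp add: cnd_def)
next
  case (insert f Fz)
  obtain S where S: "S \<subseteq> Faces D rv sc - Bd" "\<forall>d\<in>\<Union>F. cnd rv sc S d \<longleftrightarrow> edge rv d \<in> Fz"
    using insert.IH insert.prems by auto
  have fF: "f \<in> F" using insert.prems by auto
  obtain Sf where Sf: "Sf \<subseteq> Faces D rv sc - Bd" "\<forall>d\<in>\<Union>F. cnd rv sc Sf d \<longleftrightarrow> edge rv d = f"
    using Sf[OF fF] by blast
  have "sdiff S Sf \<subseteq> Faces D rv sc - Bd" using S Sf by (auto simp: sdiff_def)
  moreover have "\<forall>d\<in>\<Union>F. cnd rv sc (sdiff S Sf) d \<longleftrightarrow> edge rv d \<in> insert f Fz"
    using S(2) Sf(2) insert.hyps(2) by (auto simp: cnd_sdiff)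
  ultimately show ?case by blast
qed

lemma tree_zero:
  assumes inv: "\<forall>d\<in>D. Z (rv d) = Z d" and inT: "\<forall>d\<in>D. Z d \<longrightarrow> d \<in> \<Union>T"
    and ev: "\<forall>A. even (cross A Z)"
  shows "\<forall>d\<in>D. \<not> Z d"
proof (rule ccontr)
  assume "\<not> (\<forall>d\<in>D. \<not> Z d)"
  then obtain d0 where d0: "d0 \<in> D" "Z d0" by blast
  have d0T: "d0 \<in> \<Union>T" using inT d0 by blast
  let ?X0 = "\<Union>T - edge rv d0"
  define A where "A = {y. \<exists>ds. gwalk (Verts D sc) ?X0 (vert sc) rv (vert sc d0) ds y}"
  have X0D: "?X0 \<subseteq> D" using XTD by blast
  have wf0: "wfg (Verts D sc) ?X0 (vert sc) rv" using wfgV[OF X0D] .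
  have wfT: "wfg (Verts D sc) (\<Union>T) (vert sc) rv" using wfgV[OF XTD] .
  have clT: "\<forall>d\<in>\<Union>T. rv d \<in> \<Union>T \<and> rv (rv d) = d" using XTcl XTD by auto
  have notin: "vert sc (rv d0) \<notin> A"
    unfolding A_def using cut_lemma[OF wfT clT acT d0T] by blast
  have in1: "vert sc d0 \<in> A" unfolding A_def using vertV[OF d0(1)]
    by (intro CollectI exI[of _ "[]"]) simp
  have ext: "vert sc (rv d) \<in> A" if H: "vert sc d \<in> A" "d \<in> ?X0" for d
  proof -
    obtain ds where "gwalk (Verts D sc) ?X0 (vert sc) rv (vert sc d0) ds (vert sc d)"
      using H(1) unfolding A_def by blast
    from gwalk_snoc[OF wf0 this H(2) refl] show ?thesis unfolding A_def by blast
  qed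
  have "{d\<in>D. vert sc d \<in> A \<and> vert sc (rv d) \<notin> A \<and> Z d} = {d0}"
  proof (intro set_eqI iffI)
    fix d assume "d \<in> {d\<in>D. vert sc d \<in> A \<and> vert sc (rv d) \<notin> A \<and> Z d}"
    then have d: "d \<in> D" "vert sc d \<in> A" "vert sc (rv d) \<notin> A" "Z d" by auto
    then have "d \<in> \<Union>T" using inT by blast
    then have "d \<in> edge rv d0" using ext[of d] d by blast
    then have "d = d0 \<or> d = rv d0" by (simp add: in_edge)
    then show "d \<in> {d0}" using d notin by auto
  next
    fix d assume "d \<in> {d0}"
    then show "d \<in> {d\<in>D. vert sc d \<in> A \<and> vert sc (rv d) \<notin> A \<and> Z d}"
      using d0 in1 notin by auto
  qed
  then have "cross A Z = 1" by (simp add: cross_def)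
  then show False using ev by (metis odd_one)
qed

lemma B2:
  assumes c1: "pwalk D rv sc u1 c1 u1" and c2: "pwalk D rv sc u2 c2 u2"
    and eq: "wsig rv es \<alpha> c1 = wsig rv es \<alpha> c2"
  shows "homologous D rv sc Bd c1 c2"
proof -
  have c1D: "set c1 \<subseteq> D" and c2D: "set c2 \<subseteq> D" using c1 c2 pwalk_set by auto
  define chiZ where "chiZ = (\<lambda>d. chi rv c1 d \<noteq> chi rv c2 d)"
  define Fz where "Fz = {f\<in>F. \<exists>d\<in>f. chiZ d}"
  have finF: "finite F" using FE finD unfolding Edges_def by (meson finite_imageI finite_subset)
  obtain S where S: "S \<subseteq> Faces D rv sc - Bd" "\<forall>d\<in>\<Union>F. cnd rv sc S d \<longleftrightarrow> edge rv d \<in> Fz"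
    using S_Fz[of Fz] finF by (auto simp: Fz_def)
  have chiZrv: "d \<in> D \<Longrightarrow> chiZ (rv d) = chiZ d" for d by (simp add: chiZ_def chi_rv)
  have SF: "cnd rv sc S d = chiZ d" if d: "d \<in> \<Union>F" for d
  proof -
    have dD: "d \<in> D" using d XFD by blast
    have "edge rv d \<in> Fz \<longleftrightarrow> chiZ d"
    proof
      assume "edge rv d \<in> Fz"
      then obtain x where "x \<in> edge rv d" "chiZ x" by (auto simp: Fz_def)
      then show "chiZ d" using chiZrv[OF dD] by (auto simp: in_edge)
    next
      assume "chiZ d"
      then show "edge rv d \<in> Fz" using XFedge[OF d] by (auto simp: Fz_def edge_def)
    qed
    then show ?thesis using S(2) d by blast
  qed
  define Z where "Z = (\<lambda>d. chiZ d \<noteq> cnd rv sc S d)"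
  have Zrv: "\<forall>d\<in>D. Z (rv d) = Z d" by (simp add: Z_def chiZrv cnd_rv)
  have ZF: "d \<in> \<Union>F \<Longrightarrow> \<not> Z d" for d using SF by (simp add: Z_def)
  have al: "\<forall>i<length es. set (\<alpha> i) \<subseteq> D" using alphaD by blast
  have Zes: "\<not> Z d" if d: "d \<in> D" "edge rv d = es ! i" and i: "i < length es" for d i
  proof -
    have "odd (length (filter Z (\<alpha> i))) = ((odd (length (filter (chi rv c1) (\<alpha> i))) \<noteq> odd (length (filter (chi rv c2) (\<alpha> i))))
         \<noteq> odd (length (filter (cnd rv sc S) (\<alpha> i))))"
      unfolding Z_def chiZ_def oddf_xor ..
    also have "\<dots> = False"
      using alpha_even[OF S(1) i] wsig_bit[OF c1D al, of i] wsig_bit[OF c2D al, of i] eq i by auto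
    finally have ev: "even (length (filter Z (\<alpha> i)))" by simp
    obtain d1 where d1: "d1 \<in> set (\<alpha> i)" "edge rv d1 = es ! i" using alpha[OF i] by blast
    have d1D: "d1 \<in> D" using d1 alphaD[OF i] by blast
    have le1: "length (filter (\<lambda>x. x \<in> es ! i) (\<alpha> i)) \<le> 1"
    proof (rule filter_le1[of "edge rv"])
      show "distinct (map (edge rv) (\<alpha> i))" using alpha[OF i] by blast
      show "\<forall>x\<in>set (\<alpha> i). x \<in> es ! i \<longrightarrow> edge rv x = es ! i"
        using d1(2) d1D in_edge_eq by metis
    qed
    have "d1 \<in> set (filter (\<lambda>x. x \<in> es ! i) (\<alpha> i))" using d1 by (auto simp: edge_def)
    then have fe: "filter (\<lambda>x. x \<in> es ! i) (\<alpha> i) = [d1]" using le1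
      by (cases "filter (\<lambda>x. x \<in> es ! i) (\<alpha> i)") auto
    have "filter Z (\<alpha> i) = filter Z (filter (\<lambda>x. x \<in> es ! i) (\<alpha> i))"
    proof -
      have "filter Z (\<alpha> i) = filter (\<lambda>x. x \<in> es ! i \<and> Z x) (\<alpha> i)"
      proof (intro filter_cong refl)
        fix x assume "x \<in> set (\<alpha> i)"
        then have "x \<in> es ! i \<or> x \<in> \<Union>F" using alpha[OF i] by blast
        then show "Z x = (x \<in> es ! i \<and> Z x)" using ZF by blast
      qed
      then show ?thesis by (simp add: filter_filter conj_commute)
    qed
    then have "filter Z (\<alpha> i) = filter Z [d1]" using fe by simp
    then have "\<not> Z d1" using ev by (cases "Z d1") auto
    have "d = d1 \<or> d = rv d1" using d(2) d1(2) edge_eq by metis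
    then show ?thesis using \<open>\<not> Z d1\<close> Zrv d1D by auto
  qed
  have inT: "\<forall>d\<in>D. Z d \<longrightarrow> d \<in> \<Union>T"
  proof (intro ballI impI)
    fix d assume d: "d \<in> D" "Z d"
    have eE: "edge rv d \<in> Edges D rv" using d by (simp add: Edges_def)
    have de: "d \<in> edge rv d" by (simp add: edge_def)
    show "d \<in> \<Union>T"
    proof (cases "edge rv d \<in> T")
      case True then show ?thesis using de by blast
    next
      case False
      show ?thesis
      proof (cases "edge rv d \<in> F")
        case True then show ?thesis using de ZF d by blast
      next
        case False
        then have "edge rv d \<in> set es" using \<open>edge rv d \<notin> T\<close> eE esE by blast
        then obtain i where "i < length es" "edge rv d = es ! i" by (metis in_set_conv_nth)
        then show ?thesis using Zes d by blast
      qed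
    qed
  qed
  have ev: "\<forall>A. even (cross A Z)"
  proof
    fix A
    have "odd (cross A Z) = ((odd (cross A (chi rv c1)) \<noteq> odd (cross A (chi rv c2))) \<noteq> odd (cross A (cnd rv sc S)))"
      unfolding Z_def chiZ_def cross_xor ..
    then show "even (cross A Z)" using cross_walk[OF c1, of A] cross_walk[OF c2, of A] cross_bdry[of A S] by simp
  qed
  have "\<forall>d\<in>D. \<not> Z d" using tree_zero[OF Zrv inT ev] .
  then have "\<forall>d\<in>D. (chi rv c1 d \<noteq> chi rv c2 d) = cnd rv sc S d" by (auto simp: Z_def chiZ_def)
  then show ?thesis using homologous_iff[OF c1D c2D] S(1) by blast
qed

end



lemma gverts_snoc: "gverts vx rv u (xs @ [d]) = gverts vx rv u xs @ [vx (rv d)]"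
  by (simp add: gverts_def)

lemma gverts_rev:
  assumes wf: "wfg Vs X vx rv" and cl: "\<forall>d\<in>X. rv d \<in> X \<and> rv (rv d) = d"
    and "gwalk Vs X vx rv u ds v"
  shows "gverts vx rv v (rev (map rv ds)) = rev (gverts vx rv u ds)"
  using assms(3)
proof (induction ds arbitrary: u)
  case Nil
  then show ?case by simp
next
  case (Cons d ds)
  then have d: "d \<in> X" "vx d = u" "gwalk Vs X vx rv (vx (rv d)) ds v"
    by (auto simp: gwalk_Cons'[OF wf])
  have "gverts vx rv v (rev (map rv (d#ds))) = gverts vx rv v (rev (map rv ds)) @ [vx (rv (rv d))]"
    by (simp add: gverts_snoc)
  also have "\<dots> = rev (gverts vx rv (vx (rv d)) ds) @ [u]" using Cons.IH[OF d(3)] d cl by simp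
  finally show ?case by simp
qed

lemma len_append: "len w (a @ b) = len w a + len w b"
  by (simp add: len_def)

lemma len_rev_map:
  assumes "\<forall>d\<in>set ds. w (rv d) = w d"
  shows "len w (rev (map rv ds)) = len w ds"
proof -
  have "map (w \<circ> rv) ds = map w ds" using assms by (induction ds) auto
  note e = this
  have "len w (rev (map rv ds)) = sum_list (rev (map (w \<circ> rv) ds))" by (simp add: len_def rev_map)
  also have "\<dots> = sum_list (map w ds)" unfolding sum_list_rev e ..
  finally show ?thesis by (simp add: len_def)
qed

lemma shortest_exists:
  assumes fV: "finite Vs" and fX: "finite X" and wf: "wfg Vs X vx rv"
    and nn: "\<forall>d\<in>X. 0 \<le> w d" and wk: "gwalk Vs X vx rv u ds v"
  shows "\<exists>p. gshortest Vs X vx rv w u p v"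
proof -
  define PS where "PS = {p. gpath Vs X vx rv u p v}"
  have "PS \<subseteq> {p. set p \<subseteq> X \<and> length p \<le> card Vs}"
  proof
    fix p assume "p \<in> PS"
    then have p: "gwalk Vs X vx rv u p v" "distinct (gverts vx rv u p)" by (auto simp: PS_def gpath_def)
    have "card (set (gverts vx rv u p)) \<le> card Vs" using gwalk_verts[OF wf p(1)] fV by (intro card_mono)
    then have "length p \<le> card Vs" using distinct_card[OF p(2)] by simp
    then show "p \<in> {p. set p \<subseteq> X \<and> length p \<le> card Vs}" using gwalk_set[OF p(1)] by simp
  qed
  then have fin: "finite PS" using finite_lists_length_le[OF fX] finite_subset by blast
  obtain p0 where p0: "gpath Vs X vx rv u p0 v" "\<forall>w. (\<forall>d\<in>set ds. 0 \<le> w d) \<longrightarrow> len w p0 \<le> len w ds"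
    using gwalk_simplify[OF wf wk] by blast
  have ne: "len w ` PS \<noteq> {}" using p0 by (auto simp: PS_def)
  have "Min (len w ` PS) \<in> len w ` PS" using Min_in[OF finite_imageI[OF fin] ne] .
  then obtain p where p: "p \<in> PS" "len w p = Min (len w ` PS)" by auto
  have "len w p \<le> len w q" if q: "gwalk Vs X vx rv u q v" for q
  proof -
    obtain q' where q': "gpath Vs X vx rv u q' v" "\<forall>w. (\<forall>d\<in>set q. 0 \<le> w d) \<longrightarrow> len w q' \<le> len w q"
      using gwalk_simplify[OF wf q] by blast
    have "\<forall>d\<in>set q. 0 \<le> w d" using nn gwalk_set[OF q] by blast
    then have "len w q' \<le> len w q" using q'(2) by blast
    moreover have "len w p \<le> len w q'" using p q'(1) fin by (simp add: PS_def)
    ultimately show ?thesis by simp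
  qed
  then show ?thesis using p(1) by (auto simp: PS_def gshortest_def)
qed

context tc
begin

abbreviation "CV \<equiv> cverts D sc es"
abbreviation "CX \<equiv> cdarts D es"
abbreviation "cvx' \<equiv> cvx sc"
abbreviation "crev' \<equiv> crev rv es \<alpha>"

lemma sig_rv: "d \<in> D \<Longrightarrow> sig rv es \<alpha> (rv d) = sig rv es \<alpha> d"
  by (simp add: sig_def)

lemma sdiff_sub: "h \<subseteq> {..<length es} \<Longrightarrow> sdiff h (sig rv es \<alpha> d) \<subseteq> {..<length es}"
  using sig_sub[of rv es \<alpha> d] by (auto simp: sdiff_def)

lemma wfgC: "wfg CV CX cvx' crev'"
  unfolding wfg_def cverts_def cdarts_def cvx_def crev_def
  using vertV rvD sdiff_sub by auto

lemma clC: "\<forall>x\<in>CX. crev' x \<in> CX \<and> crev' (crev' x) = x"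
  unfolding cdarts_def crev_def using rvD sdiff_sub sig_rv by (auto simp: sdiff_cancel sdiff_assoc)

lemma finCV: "finite CV"
  unfolding cverts_def Verts_def using finD by simp
lemma finCX: "finite CX"
  unfolding cdarts_def using finD by simp

lemma cw_nn: "\<forall>x\<in>CX. 0 \<le> cw w x"
  unfolding cdarts_def cw_def using wnn by auto

lemma lift_fst[simp]: "map fst (lift rv es \<alpha> h p) = p"
  by (induction p arbitrary: h) auto

lemma len_cw: "len (cw w) P = len w (map fst P)"
proof -
  have "cw w = w \<circ> fst" by (simp add: fun_eq_iff cw_def)
  then show ?thesis by (simp add: len_def)
qed

lemma lift_len: "len (cw w) (lift rv es \<alpha> h p) = len w p"
  by (simp add: len_cw)

lemma lift_walk:
  assumes "pwalk D rv sc u p v" "h \<subseteq> {..<length es}"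
  shows "gwalk CV CX cvx' crev' (u, h) (lift rv es \<alpha> h p) (v, sdiff h (wsig rv es \<alpha> p))"
  using assms unfolding pwalk_def
proof (induction p arbitrary: u h)
  case Nil
  then show ?case by (simp add: cverts_def)
next
  case (Cons d p)
  then have d: "d \<in> D" "vert sc d = u" "gwalk (Verts D sc) D (vert sc) rv (vert sc (rv d)) p v" "u \<in> Verts D sc"
    by (auto simp: gwalk_Cons'[OF wfgV[OF order_refl]])
  have IH: "gwalk CV CX cvx' crev' (vert sc (rv d), sdiff h (sig rv es \<alpha> d))
     (lift rv es \<alpha> (sdiff h (sig rv es \<alpha> d)) p) (v, sdiff (sdiff h (sig rv es \<alpha> d)) (wsig rv es \<alpha> p))"
    using Cons.IH[OF d(3) sdiff_sub[OF Cons.prems(2)]] .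
  have e1: "cvx' (crev' (d, h)) = (vert sc (rv d), sdiff h (sig rv es \<alpha> d))"
    by (simp add: cvx_def crev_def)
  have e2: "sdiff (sdiff h (sig rv es \<alpha> d)) (wsig rv es \<alpha> p) = sdiff h (wsig rv es \<alpha> (d#p))"
    by (simp add: wsig_Cons sdiff_assoc)
  have "(u, h) \<in> CV" "(d, h) \<in> CX" "cvx' (d, h) = (u, h)"
    using d Cons.prems(2) by (auto simp: cverts_def cdarts_def cvx_def)
  then show ?case unfolding lift.simps gwalk_Cons'[OF wfgC] e1 using IH e2 by simp
qed

lemma proj_walk:
  assumes "gwalk CV CX cvx' crev' (u, h) P y"
  shows "pwalk D rv sc u (map fst P) (fst y) \<and> snd y = sdiff h (wsig rv es \<alpha> (map fst P)) \<and>
         P = lift rv es \<alpha> h (map fst P)"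
  using assms unfolding pwalk_def
proof (induction P arbitrary: u h)
  case Nil
  then show ?case by (auto simp: cverts_def)
next
  case (Cons x P)
  obtain d h' where x: "x = (d, h')" by (cases x)
  from Cons.prems have H: "(u, h) \<in> CV" "x \<in> CX" "cvx' x = (u, h)"
      "gwalk CV CX cvx' crev' (cvx' (crev' x)) P y"
    by (auto simp: gwalk_Cons'[OF wfgC])
  then have d: "d \<in> D" "h' = h" "vert sc d = u" "u \<in> Verts D sc"
    using x by (auto simp: cvx_def cdarts_def cverts_def)
  have "cvx' (crev' x) = (vert sc (rv d), sdiff h (sig rv es \<alpha> d))"
    using x d by (simp add: cvx_def crev_def)
  then have IH: "gwalk (Verts D sc) D (vert sc) rv (vert sc (rv d)) (map fst P) (fst y) \<and>
     snd y = sdiff (sdiff h (sig rv es \<alpha> d)) (wsig rv es \<alpha> (map fst P)) \<and>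
     P = lift rv es \<alpha> (sdiff h (sig rv es \<alpha> d)) (map fst P)"
    using Cons.IH H(4) by simp
  have "vert sc (rv d) \<in> Verts D sc" using vertV rvD d by blast
  then show ?case using IH d x
    by (simp add: gwalk_Cons'[OF wfgV[OF order_refl]] wsig_Cons sdiff_assoc)
qed

lemma lift_gverts_fst: "map fst (gverts cvx' crev' (u, h) (lift rv es \<alpha> h p)) = gverts (vert sc) rv u p"
  by (induction p arbitrary: u h) (auto simp: cvx_def crev_def)

lemma lift_gverts:
  "j \<le> length p \<Longrightarrow> gverts cvx' crev' (u, h) (lift rv es \<alpha> h p) ! j =
     (gverts (vert sc) rv u p ! j, sdiff h (wsig rv es \<alpha> (take j p)))"
proof (induction p arbitrary: u h j)
  case Nil
  then show ?case by simp
next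
  case (Cons d p)
  show ?case
  proof (cases j)
    case 0
    then show ?thesis by simp
  next
    case (Suc j')
    then show ?thesis using Cons by (simp add: cvx_def crev_def wsig_Cons sdiff_assoc)
  qed
qed

end



context tc
begin

lemma slice_opt:
  assumes sp: "gshortest (Verts D sc) D (vert sc) rv w s \<sigma> t"
    and ij: "i \<le> j" "j \<le> length \<sigma>"
    and r: "pwalk D rv sc (gverts (vert sc) rv s \<sigma> ! i) r (gverts (vert sc) rv s \<sigma> ! j)"
  shows "len w (take (j - i) (drop i \<sigma>)) \<le> len w r"
proof -
  have wf: "wfg (Verts D sc) D (vert sc) rv" using wfgV[OF order_refl] .
  have \<sigma>w: "gwalk (Verts D sc) D (vert sc) rv s \<sigma> t" using sp by (simp add: gshortest_def gpath_def)
  have t1: "gwalk (Verts D sc) D (vert sc) rv s (take i \<sigma>) (gverts (vert sc) rv s \<sigma> ! i)"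
    using gwalk_take[OF wf \<sigma>w] ij by simp
  have t2: "gwalk (Verts D sc) D (vert sc) rv (gverts (vert sc) rv s \<sigma> ! j) (drop j \<sigma>) t"
    using gwalk_drop[OF wf \<sigma>w] ij by simp
  have "gwalk (Verts D sc) D (vert sc) rv s (take i \<sigma> @ r @ drop j \<sigma>) t"
    using t1 t2 r unfolding pwalk_def gwalk_append[OF wf] by blast
  then have le: "len w \<sigma> \<le> len w (take i \<sigma> @ r @ drop j \<sigma>)"
    using sp by (simp add: gshortest_def)
  have "\<sigma> = take i \<sigma> @ take (j - i) (drop i \<sigma>) @ drop j \<sigma>"
  proof -
    have "drop (j - i) (drop i \<sigma>) = drop j \<sigma>" using ij by simp
    then have "take (j - i) (drop i \<sigma>) @ drop j \<sigma> = drop i \<sigma>"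
      by (metis append_take_drop_id)
    then show ?thesis by simp
  qed
  then have "len w \<sigma> = len w (take i \<sigma>) + len w (take (j - i) (drop i \<sigma>)) + len w (drop j \<sigma>)"
    by (metis len_append add.assoc)
  then show ?thesis using le by (simp add: len_append)
qed

lemma seg_exists:
  assumes sp: "gshortest (Verts D sc) D (vert sc) rv w s \<sigma> t"
    and i1: "i1 \<le> length \<sigma>" and i2: "i2 \<le> length \<sigma>"
  shows "\<exists>seg. gwalk CV CX cvx' crev' (gverts cvx' crev' (s,{}) (lift rv es \<alpha> {} \<sigma>) ! i1) seg
                   (gverts cvx' crev' (s,{}) (lift rv es \<alpha> {} \<sigma>) ! i2) \<and>
     distinct (gverts cvx' crev' (gverts cvx' crev' (s,{}) (lift rv es \<alpha> {} \<sigma>) ! i1) seg) \<and>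
     set (gverts cvx' crev' (gverts cvx' crev' (s,{}) (lift rv es \<alpha> {} \<sigma>) ! i1) seg)
        \<subseteq> set (gverts cvx' crev' (s,{}) (lift rv es \<alpha> {} \<sigma>)) \<and>
     (\<forall>r. pwalk D rv sc (gverts (vert sc) rv s \<sigma> ! i1) r (gverts (vert sc) rv s \<sigma> ! i2)
          \<longrightarrow> len (cw w) seg \<le> len w r) \<and>
     (\<exists>ps ss. lift rv es \<alpha> {} \<sigma> = ps @ seg @ ss \<or>
              rev (map crev' (lift rv es \<alpha> {} \<sigma>)) = ps @ seg @ ss)"
proof -
  define L where "L = lift rv es \<alpha> {} \<sigma>"
  define GL where "GL = gverts cvx' crev' (s,{}) L"
  have wf: "wfg (Verts D sc) D (vert sc) rv" using wfgV[OF order_refl] .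
  have clD: "\<forall>d\<in>D. rv d \<in> D \<and> rv (rv d) = d" using rvD by simp
  have \<sigma>w: "pwalk D rv sc s \<sigma> t" and \<sigma>d: "distinct (gverts (vert sc) rv s \<sigma>)"
    using sp by (auto simp: gshortest_def gpath_def pwalk_def)
  have Lw: "gwalk CV CX cvx' crev' (s,{}) L (t, wsig rv es \<alpha> \<sigma>)"
    using lift_walk[OF \<sigma>w, of "{}"] by (simp add: L_def)
  have lenL: "length L = length \<sigma>" by (metis L_def length_map lift_fst)
  have GLd: "distinct GL"
    using \<sigma>d lift_gverts_fst[of s "{}" \<sigma>] by (metis GL_def L_def distinct_map)
  have fstL: "map fst L = \<sigma>" by (simp add: L_def)
  have fwd: "gwalk CV CX cvx' crev' (GL ! i) (take (j - i) (drop i L)) (GL ! j) \<and>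
        gverts cvx' crev' (GL ! i) (take (j - i) (drop i L)) = take (Suc (j - i)) (drop i GL)"
    if ij: "i \<le> j" "j \<le> length \<sigma>" for i j
  proof -
    have dw: "gwalk CV CX cvx' crev' (GL ! i) (drop i L) (t, wsig rv es \<alpha> \<sigma>)"
      using gwalk_drop[OF wfgC Lw] ij lenL by (simp add: GL_def)
    have gd: "gverts cvx' crev' (GL ! i) (drop i L) = drop i GL"
      using gverts_drop[of i L] ij lenL by (simp add: GL_def)
    have "gverts cvx' crev' (GL ! i) (drop i L) ! (j - i) = GL ! j"
      using gd ij lenL by (simp add: GL_def)
    then have "gwalk CV CX cvx' crev' (GL ! i) (take (j - i) (drop i L)) (GL ! j)"
      using gwalk_take[OF wfgC dw, of "j - i"] ij lenL by simp
    moreover have "gverts cvx' crev' (GL ! i) (take (j - i) (drop i L)) = take (Suc (j - i)) (drop i GL)"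
    proof -
      have "j - i \<le> length (drop i L)" using ij lenL by simp
      from gverts_take[OF this, of cvx' crev' "GL ! i"] show ?thesis using gd by simp
    qed
    ultimately show ?thesis by simp
  qed
  have sl_len: "len (cw w) (take (j - i) (drop i L)) = len w (take (j - i) (drop i \<sigma>))" for i j
    by (simp add: len_cw take_map[symmetric] drop_map[symmetric] fstL)
  have Lsplit: "L = take i L @ take (j - i) (drop i L) @ drop j L" if "i \<le> j" for i j
  proof -
    have "drop (j - i) (drop i L) = drop j L" using that by simp
    then have "take (j - i) (drop i L) @ drop j L = drop i L" by (metis append_take_drop_id)
    then show ?thesis by simp
  qed
  show ?thesis
  proof (cases "i1 \<le> i2")
    case True
    define seg where "seg = take (i2 - i1) (drop i1 L)"
    have f: "gwalk CV CX cvx' crev' (GL ! i1) seg (GL ! i2)"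
        "gverts cvx' crev' (GL ! i1) seg = take (Suc (i2 - i1)) (drop i1 GL)"
      using fwd[OF True i2] by (auto simp: seg_def)
    have "distinct (gverts cvx' crev' (GL ! i1) seg)" using f(2) GLd by simp
    moreover have "set (gverts cvx' crev' (GL ! i1) seg) \<subseteq> set GL" using f(2)
      by (metis set_drop_subset set_take_subset subset_trans)
    moreover have "\<forall>r. pwalk D rv sc (gverts (vert sc) rv s \<sigma> ! i1) r (gverts (vert sc) rv s \<sigma> ! i2)
          \<longrightarrow> len (cw w) seg \<le> len w r"
      using slice_opt[OF sp True i2] sl_len by (simp add: seg_def)
    moreover have "L = take i1 L @ seg @ drop i2 L" using Lsplit[OF True] by (simp add: seg_def)
    ultimately show ?thesis using f(1) unfolding GL_def L_def by blast
  next
    case False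
    then have le: "i2 \<le> i1" by simp
    define sl where "sl = take (i1 - i2) (drop i2 L)"
    define seg where "seg = rev (map crev' sl)"
    have f: "gwalk CV CX cvx' crev' (GL ! i2) sl (GL ! i1)"
        "gverts cvx' crev' (GL ! i2) sl = take (Suc (i1 - i2)) (drop i2 GL)"
      using fwd[OF le i1] by (auto simp: sl_def)
    have sw: "gwalk CV CX cvx' crev' (GL ! i1) seg (GL ! i2)"
      using gwalk_rev[OF wfgC clC f(1)] by (simp add: seg_def)
    have gs: "gverts cvx' crev' (GL ! i1) seg = rev (take (Suc (i1 - i2)) (drop i2 GL))"
      using gverts_rev[OF wfgC clC f(1)] f(2) by (simp add: seg_def)
    have "distinct (gverts cvx' crev' (GL ! i1) seg)" using gs GLd by simp
    moreover have "set (gverts cvx' crev' (GL ! i1) seg) \<subseteq> set GL" using gs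
      by (metis set_rev set_drop_subset set_take_subset subset_trans)
    moreover have "\<forall>r. pwalk D rv sc (gverts (vert sc) rv s \<sigma> ! i1) r (gverts (vert sc) rv s \<sigma> ! i2)
          \<longrightarrow> len (cw w) seg \<le> len w r"
    proof (intro allI impI)
      fix r assume r: "pwalk D rv sc (gverts (vert sc) rv s \<sigma> ! i1) r (gverts (vert sc) rv s \<sigma> ! i2)"
      have r': "pwalk D rv sc (gverts (vert sc) rv s \<sigma> ! i2) (rev (map rv r)) (gverts (vert sc) rv s \<sigma> ! i1)"
        using gwalk_rev[OF wf clD] r by (simp add: pwalk_def)
      have lr: "len w (rev (map rv r)) = len w r"
        using len_rev_map[of r w rv] pwalk_set[OF r] wrv by blast
      have slX: "set sl \<subseteq> CX" using gwalk_set[OF f(1)] .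
      have "\<forall>x\<in>set sl. cw w (crev' x) = cw w x"
        using slX wrv by (auto simp: cw_def crev_def cdarts_def)
      then have "len (cw w) seg = len (cw w) sl" unfolding seg_def by (rule len_rev_map)
      also have "\<dots> = len w (take (i1 - i2) (drop i2 \<sigma>))" unfolding sl_def by (rule sl_len)
      also have "\<dots> \<le> len w (rev (map rv r))" using slice_opt[OF sp le i1 r'] .
      finally show "len (cw w) seg \<le> len w r" using lr by simp
    qed
    moreover have "rev (map crev' L) = rev (map crev' (drop i1 L)) @ seg @ rev (map crev' (take i2 L))"
    proof -
      have "rev (map crev' L) = rev (map crev' (take i2 L @ sl @ drop i1 L))"
        using Lsplit[OF le] by (simp add: sl_def)
      then show ?thesis by (simp add: seg_def)
    qed
    ultimately show ?thesis using sw unfolding GL_def L_def by blast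
  qed
qed

end



context tc
begin

lemma len_nn: "set c \<subseteq> D \<Longrightarrow> 0 \<le> len w c"
  unfolding len_def using wnn by (intro sum_list_nonneg) auto

lemma lenC_nn: "set c \<subseteq> CX \<Longrightarrow> 0 \<le> len (cw w) c"
  unfolding len_def using cw_nn by (intro sum_list_nonneg) auto

lemma main:
  assumes gmin: "z2_minimal D rv sc Bd w x \<gamma>"
    and sp: "gshortest (Verts D sc) D (vert sc) rv w s \<sigma> t"
    and meet: "set (gverts (vert sc) rv s \<sigma>) \<inter> set (gverts (vert sc) rv x \<gamma>) \<noteq> {}"
  shows "\<exists>u \<gamma>' h k.
     z2_minimal D rv sc Bd w u \<gamma>' \<and> homologous D rv sc Bd \<gamma>' \<gamma> \<and>
     h \<subseteq> {..<length es} \<and>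
     cshortest D rv sc es \<alpha> w (u, h) (lift rv es \<alpha> h \<gamma>') (u, sdiff h (wsig rv es \<alpha> \<gamma>')) \<and>
     k \<le> length \<gamma>' \<and>
     (\<exists>ps ss. lift rv es \<alpha> {} \<sigma> = ps @ take k (lift rv es \<alpha> h \<gamma>') @ ss \<or>
              rev (map (crev rv es \<alpha>) (lift rv es \<alpha> {} \<sigma>)) = ps @ take k (lift rv es \<alpha> h \<gamma>') @ ss) \<and>
     (u, h) \<in> set (gverts (cvx sc) (crev rv es \<alpha>) (s, {}) (lift rv es \<alpha> {} \<sigma>)) \<and>
     (\<forall>j. k < j \<and> j \<le> length \<gamma>' \<longrightarrow>
        gverts (cvx sc) (crev rv es \<alpha>) (u, h) (lift rv es \<alpha> h \<gamma>') ! j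
          \<notin> set (gverts (cvx sc) (crev rv es \<alpha>) (s, {}) (lift rv es \<alpha> {} \<sigma>)))"
proof -
  define g where "g = wsig rv es \<alpha> \<gamma>"
  define L where "L = lift rv es \<alpha> {} \<sigma>"
  define GL where "GL = gverts cvx' crev' (s,{}) L"
  have wf: "wfg (Verts D sc) D (vert sc) rv" using wfgV[OF order_refl] .
  have \<gamma>w: "pwalk D rv sc x \<gamma> x" using gmin by (simp add: z2_minimal_def)
  have \<sigma>w: "pwalk D rv sc s \<sigma> t" and \<sigma>d: "distinct (gverts (vert sc) rv s \<sigma>)"
    using sp by (auto simp: gshortest_def gpath_def pwalk_def)
  have sV: "s \<in> Verts D sc" using \<sigma>w by (simp add: pwalk_def gwalk_def)
  have MIN: "len w \<gamma> \<le> len w c" if c: "pwalk D rv sc u' c u'" "wsig rv es \<alpha> c = g" for u' c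
  proof -
    have "homologous D rv sc Bd c \<gamma>" using B2[OF c(1) \<gamma>w] c(2) by (simp add: g_def)
    then show ?thesis using gmin c(1) by (auto simp: z2_minimal_def)
  qed
  show ?thesis
  proof (cases "g = {}")
    case True
    have "z2_minimal D rv sc Bd w s []"
      unfolding z2_minimal_def using sV len_nn pwalk_set by (auto simp: pwalk_def len_def)
    moreover have "homologous D rv sc Bd [] \<gamma>"
      using B2[of s "[]" x \<gamma>] \<gamma>w sV True by (simp add: g_def pwalk_def)
    moreover have "cshortest D rv sc es \<alpha> w (s, {}) (lift rv es \<alpha> {} []) (s, sdiff {} (wsig rv es \<alpha> []))"
      unfolding cshortest_def gshortest_def gpath_def
    proof (intro conjI allI impI)
      show "gwalk CV CX cvx' crev' (s, {}) (lift rv es \<alpha> {} []) (s, sdiff {} (wsig rv es \<alpha> []))"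
        using sV by (simp add: cverts_def)
      show "distinct (gverts cvx' crev' (s, {}) (lift rv es \<alpha> {} []))" by simp
      fix q assume q: "gwalk CV CX cvx' crev' (s, {}) q (s, sdiff {} (wsig rv es \<alpha> []))"
      show "len (cw w) (lift rv es \<alpha> {} []) \<le> len (cw w) q"
        using lenC_nn[OF gwalk_set[OF q]] by (simp add: len_def)
    qed
    moreover have "\<exists>ps ss. lift rv es \<alpha> {} \<sigma> = ps @ take 0 (lift rv es \<alpha> {} []) @ ss"
      by (rule exI[of _ "lift rv es \<alpha> {} \<sigma>"], rule exI[of _ "[]"]) simp
    moreover have "(s, {}) \<in> set (gverts (cvx sc) (crev rv es \<alpha>) (s, {}) (lift rv es \<alpha> {} \<sigma>))"
      by simp
    ultimately show ?thesis
      by (intro exI[of _ s] exI[of _ "[]"] exI[of _ "{}"] exI[of _ 0]) auto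
  next
    case False
    obtain v where v: "v \<in> set (gverts (vert sc) rv s \<sigma>)" "v \<in> set (gverts (vert sc) rv x \<gamma>)"
      using meet by blast
    obtain iv where iv: "iv \<le> length \<sigma>" "gverts (vert sc) rv s \<sigma> ! iv = v"
      using v(1) by (metis in_set_conv_nth gverts_length less_Suc_eq_le)
    obtain jv where jv: "jv \<le> length \<gamma>" "gverts (vert sc) rv x \<gamma> ! jv = v"
      using v(2) by (metis in_set_conv_nth gverts_length less_Suc_eq_le)
    define h0 where "h0 = wsig rv es \<alpha> (take iv \<sigma>)"
    have h0s: "h0 \<subseteq> {..<length es}" using wsig_sub by (simp add: h0_def)
    have lenL: "length L = length \<sigma>" by (metis L_def length_map lift_fst)
    have Vx: "GL ! j = (gverts (vert sc) rv s \<sigma> ! j, wsig rv es \<alpha> (take j \<sigma>))" if "j \<le> length \<sigma>" for j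
      using lift_gverts[OF that, of s "{}"] by (simp add: GL_def L_def)
    have Lw: "gwalk CV CX cvx' crev' (s,{}) L (t, wsig rv es \<alpha> \<sigma>)"
      using lift_walk[OF \<sigma>w, of "{}"] by (simp add: L_def)
    have GLfst: "map fst GL = gverts (vert sc) rv s \<sigma>"
      using lift_gverts_fst[of s "{}" \<sigma>] by (simp add: GL_def L_def)
    have injGL: "inj_on fst (set GL)" using \<sigma>d GLfst by (metis distinct_map)
    have uniq: "h1 = h2" if "(y, h1) \<in> set GL" "(y, h2) \<in> set GL" for y h1 h2
      using injGL that by (metis fst_conv inj_onD prod.inject)
    define a where "a = (v, h0)"
    have aGL: "GL ! iv = a" using Vx[OF iv(1)] iv(2) by (simp add: a_def h0_def)
    have aS: "a \<in> set GL" using aGL iv(1) lenL by (metis GL_def gverts_length le_imp_less_Suc nth_mem)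
    define \<gamma>r where "\<gamma>r = drop jv \<gamma> @ take jv \<gamma>"
    have \<gamma>w': "gwalk (Verts D sc) D (vert sc) rv x \<gamma> x" using \<gamma>w by (simp add: pwalk_def)
    have \<gamma>rw: "pwalk D rv sc v \<gamma>r v"
    proof -
      have "gwalk (Verts D sc) D (vert sc) rv x (take jv \<gamma>) v" using gwalk_take[OF wf \<gamma>w' jv(1)] jv(2) by simp
      moreover have "gwalk (Verts D sc) D (vert sc) rv v (drop jv \<gamma>) x" using gwalk_drop[OF wf \<gamma>w' jv(1)] jv(2) by simp
      ultimately show ?thesis unfolding pwalk_def \<gamma>r_def gwalk_append[OF wf] by blast
    qed
    have \<gamma>rs: "wsig rv es \<alpha> \<gamma>r = g"
      unfolding \<gamma>r_def g_def wsig_append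
      by (metis append_take_drop_id sdiff_comm wsig_append)
    have \<gamma>rl: "len w \<gamma>r = len w \<gamma>"
      unfolding \<gamma>r_def len_append by (metis add.commute append_take_drop_id len_append)
    define b where "b = (v, sdiff h0 g)"
    have liftw: "gwalk CV CX cvx' crev' a (lift rv es \<alpha> h0 \<gamma>r) b"
      using lift_walk[OF \<gamma>rw h0s] \<gamma>rs by (simp add: a_def b_def)
    obtain P where P: "gshortest CV CX cvx' crev' (cw w) a P b"
      using shortest_exists[OF finCV finCX wfgC cw_nn liftw] by blast
    have Pw: "gwalk CV CX cvx' crev' a P b" and Pd: "distinct (gverts cvx' crev' a P)"
      using P by (auto simp: gshortest_def gpath_def)
    have Plen: "len (cw w) P \<le> len w \<gamma>"
      using P liftw lift_len[of h0 \<gamma>r] \<gamma>rl by (auto simp: gshortest_def)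
    define m where "m = length P"
    define GP where "GP = gverts cvx' crev' a P"
    have GPm: "GP ! m = b" using gverts_nth_last[OF wfgC Pw] by (simp add: GP_def m_def)
    have bnot: "b \<notin> set GL"
    proof
      assume "b \<in> set GL"
      then have "sdiff h0 g = h0" using uniq aS by (auto simp: a_def b_def)
      then have "g = {}" by (metis sdiff_cancel sdiff_self)
      then show False using False by simp
    qed
    define J where "J = {j. j \<le> m \<and> GP ! j \<in> set GL}"
    have finJ: "finite J" by (rule finite_subset[of _ "{..m}"]) (auto simp: J_def)
    have J0: "0 \<in> J" using aS by (simp add: J_def GP_def)
    define jp where "jp = Max J"
    have jpJ: "jp \<in> J" using Max_in[OF finJ] J0 by (auto simp: jp_def)
    have jpmax: "j \<in> J \<Longrightarrow> j \<le> jp" for j using Max_ge[OF finJ] by (simp add: jp_def)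
    have jpm: "jp < m" using jpJ GPm bnot by (metis J_def le_neq_implies_less mem_Collect_eq)
    define p where "p = GP ! jp"
    have pGL: "p \<in> set GL" using jpJ by (simp add: J_def p_def)
    obtain ip where ip: "ip \<le> length \<sigma>" "GL ! ip = p"
      using pGL lenL by (metis GL_def in_set_conv_nth gverts_length less_Suc_eq_le)
    obtain seg where seg:
      "gwalk CV CX cvx' crev' (GL ! iv) seg (GL ! ip)"
      "distinct (gverts cvx' crev' (GL ! iv) seg)"
      "set (gverts cvx' crev' (GL ! iv) seg) \<subseteq> set GL"
      "\<forall>r. pwalk D rv sc (gverts (vert sc) rv s \<sigma> ! iv) r (gverts (vert sc) rv s \<sigma> ! ip)
          \<longrightarrow> len (cw w) seg \<le> len w r"
      "\<exists>ps ss. L = ps @ seg @ ss \<or> rev (map crev' L) = ps @ seg @ ss"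
      using seg_exists[OF sp iv(1) ip(1)] unfolding GL_def L_def by blast
    have segw: "gwalk CV CX cvx' crev' a seg p" using seg(1) aGL ip(2) by simp
    have segv: "distinct (gverts cvx' crev' a seg)" "set (gverts cvx' crev' a seg) \<subseteq> set GL"
      using seg(2,3) aGL by auto
    define Ps where "Ps = drop jp P"
    have Psw: "gwalk CV CX cvx' crev' p Ps b"
      using gwalk_drop[OF wfgC Pw, of jp] jpm by (simp add: Ps_def p_def GP_def m_def)
    have Psv: "gverts cvx' crev' p Ps = drop jp GP"
      using gverts_drop[of jp P cvx' crev' a] jpm by (simp add: Ps_def p_def GP_def m_def)
    define Q where "Q = seg @ Ps"
    have Qw: "gwalk CV CX cvx' crev' a Q b" unfolding Q_def gwalk_append[OF wfgC] using segw Psw by blast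
    have GQ: "gverts cvx' crev' a Q = gverts cvx' crev' a seg @ drop (Suc jp) GP"
      using gverts_append[of cvx' crev' a seg Ps p] Psv by (simp add: Q_def drop_Suc tl_drop)
    have after: "GP ! j \<notin> set GL" if "jp < j" "j \<le> m" for j
      using jpmax[of j] that by (auto simp: J_def)
    have Qd: "distinct (gverts cvx' crev' a Q)"
    proof -
      have "distinct (drop (Suc jp) GP)" using Pd by (simp add: GP_def)
      moreover have "set (drop (Suc jp) GP) \<inter> set GL = {}"
      proof -
        have "z \<notin> set GL" if z: "z \<in> set (drop (Suc jp) GP)" for z
        proof -
          obtain i where i: "i < length (drop (Suc jp) GP)" "z = drop (Suc jp) GP ! i"
            using z by (metis in_set_conv_nth)
          have lGP: "length GP = Suc m" by (simp add: GP_def m_def)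
          have "z = GP ! (Suc jp + i)" using i lGP by simp
          moreover have "Suc jp + i \<le> m" using i lGP by simp
          ultimately show ?thesis using after[of "Suc jp + i"] by simp
        qed
        then show ?thesis by blast
      qed
      ultimately show ?thesis using GQ segv by auto
    qed
    have tw: "gwalk CV CX cvx' crev' a (take jp P) p"
      using gwalk_take[OF wfgC Pw, of jp] jpm by (simp add: p_def GP_def m_def)
    have fstp: "fst p = gverts (vert sc) rv s \<sigma> ! ip" using Vx[OF ip(1)] ip(2) by simp
    have tpw: "pwalk D rv sc v (map fst (take jp P)) (gverts (vert sc) rv s \<sigma> ! ip)"
      using proj_walk[of v h0 "take jp P" p] tw fstp by (simp add: a_def)
    have "len (cw w) seg \<le> len w (map fst (take jp P))" using seg(4) tpw iv(2) by simp
    then have "len (cw w) seg \<le> len (cw w) (take jp P)" by (simp add: len_cw)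
    moreover have "len (cw w) P = len (cw w) (take jp P) + len (cw w) Ps"
      by (metis Ps_def append_take_drop_id len_append)
    ultimately have Qlen: "len (cw w) Q \<le> len w \<gamma>" using Plen by (simp add: Q_def len_append)
    define \<gamma>' where "\<gamma>' = map fst Q"
    have pj: "pwalk D rv sc v \<gamma>' v \<and> sdiff h0 g = sdiff h0 (wsig rv es \<alpha> \<gamma>') \<and> Q = lift rv es \<alpha> h0 \<gamma>'"
      using proj_walk[of v h0 Q b] Qw by (simp add: a_def b_def \<gamma>'_def)
    have \<gamma>'w: "pwalk D rv sc v \<gamma>' v" using pj by blast
    have \<gamma>'s: "wsig rv es \<alpha> \<gamma>' = g" using pj by (metis sdiff_cancel)
    have Qlift: "lift rv es \<alpha> h0 \<gamma>' = Q" using pj by simp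
    have \<gamma>'len: "len w \<gamma>' \<le> len w \<gamma>" using Qlen by (simp add: len_cw \<gamma>'_def)
    have c1: "z2_minimal D rv sc Bd w v \<gamma>'"
      unfolding z2_minimal_def
    proof (intro conjI allI impI)
      show "pwalk D rv sc v \<gamma>' v" by (rule \<gamma>'w)
      fix v' c' assume H: "pwalk D rv sc v' c' v' \<and> homologous D rv sc Bd c' \<gamma>'"
      then have "wsig rv es \<alpha> c' = g" using B1[of c' \<gamma>'] pwalk_set \<gamma>'w \<gamma>'s by metis
      then show "len w \<gamma>' \<le> len w c'" using MIN[of v' c'] H \<gamma>'len by simp
    qed
    have c2: "homologous D rv sc Bd \<gamma>' \<gamma>" using B2[OF \<gamma>'w \<gamma>w] \<gamma>'s by (simp add: g_def)
    have c4: "cshortest D rv sc es \<alpha> w (v, h0) (lift rv es \<alpha> h0 \<gamma>') (v, sdiff h0 (wsig rv es \<alpha> \<gamma>'))"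
      unfolding cshortest_def gshortest_def gpath_def Qlift \<gamma>'s
    proof (intro conjI allI impI)
      show "gwalk CV CX cvx' crev' (v, h0) Q (v, sdiff h0 g)" using Qw by (simp add: a_def b_def)
      show "distinct (gverts cvx' crev' (v, h0) Q)" using Qd by (simp add: a_def)
      fix q assume q: "gwalk CV CX cvx' crev' (v, h0) q (v, sdiff h0 g)"
      have "pwalk D rv sc v (map fst q) v \<and> sdiff h0 g = sdiff h0 (wsig rv es \<alpha> (map fst q))"
        using proj_walk[OF q] by simp
      then have "pwalk D rv sc v (map fst q) v" "wsig rv es \<alpha> (map fst q) = g"
        by (auto dest: arg_cong[of _ _ "sdiff h0"] simp: sdiff_cancel)
      then have "len w \<gamma> \<le> len (cw w) q" using MIN by (simp add: len_cw)
      then show "len (cw w) Q \<le> len (cw w) q" using Qlen by simp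
    qed
    have lQ: "length \<gamma>' = length seg + (m - jp)" by (simp add: \<gamma>'_def Q_def Ps_def m_def)
    have c6: "\<exists>ps ss. lift rv es \<alpha> {} \<sigma> = ps @ take (length seg) (lift rv es \<alpha> h0 \<gamma>') @ ss \<or>
              rev (map crev' (lift rv es \<alpha> {} \<sigma>)) = ps @ take (length seg) (lift rv es \<alpha> h0 \<gamma>') @ ss"
      using seg(5) Qlift by (simp add: Q_def L_def)
    have c7: "(v, h0) \<in> set GL" using aS by (simp add: a_def)
    have c8: "\<forall>j. length seg < j \<and> j \<le> length \<gamma>' \<longrightarrow>
        gverts cvx' crev' (v, h0) (lift rv es \<alpha> h0 \<gamma>') ! j \<notin> set GL"
    proof (intro allI impI)
      fix j assume j: "length seg < j \<and> j \<le> length \<gamma>'"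
      have "gverts cvx' crev' (v, h0) (lift rv es \<alpha> h0 \<gamma>') ! j = (gverts cvx' crev' a seg @ drop (Suc jp) GP) ! j"
        using GQ Qlift by (simp add: a_def)
      also have "\<dots> = drop (Suc jp) GP ! (j - Suc (length seg))" using j by (simp add: nth_append)
      also have "\<dots> = GP ! (Suc jp + (j - Suc (length seg)))"
        using j lQ jpm by (simp add: GP_def m_def)
      moreover have "jp < Suc jp + (j - Suc (length seg))" by simp
      moreover have "Suc jp + (j - Suc (length seg)) \<le> m" using j lQ jpm by linarith
      ultimately show "gverts cvx' crev' (v, h0) (lift rv es \<alpha> h0 \<gamma>') ! j \<notin> set GL"
        using after by metis
    qed
    show ?thesis
      apply (rule exI[of _ v], rule exI[of _ \<gamma>'], rule exI[of _ h0], rule exI[of _ "length seg"])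
      using c1 c2 h0s c4 lQ c6 c7 c8 unfolding GL_def L_def by simp
  qed
qed

end


theorem lemma5p4:
  fixes D :: "'d set" and rv sc :: "'d \<Rightarrow> 'd" and Bd :: "'d set set" and w :: "'d \<Rightarrow> real"
    and T F :: "'d set set" and es :: "'d set list" and \<alpha> :: "nat \<Rightarrow> 'd list"
    and x :: "'d set" and \<gamma> :: "'d list" and s t :: "'d set" and \<sigma> :: "'d list"
  assumes surf: "surface_graph D rv sc Bd w"
    and dec: "tree_coforest D rv sc Bd T F es \<alpha>"
    and gmin: "z2_minimal D rv sc Bd w x \<gamma>"
    and sp: "gshortest (Verts D sc) D (vert sc) rv w s \<sigma> t"
    and meet: "set (gverts (vert sc) rv s \<sigma>) \<inter> set (gverts (vert sc) rv x \<gamma>) \<noteq> {}"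
  shows "\<exists>u \<gamma>' h k.
     z2_minimal D rv sc Bd w u \<gamma>' \<and> homologous D rv sc Bd \<gamma>' \<gamma> \<and>
     h \<subseteq> {..<length es} \<and>
     cshortest D rv sc es \<alpha> w (u, h) (lift rv es \<alpha> h \<gamma>') (u, sdiff h (wsig rv es \<alpha> \<gamma>')) \<and>
     k \<le> length \<gamma>' \<and>
     (\<exists>ps ss. lift rv es \<alpha> {} \<sigma> = ps @ take k (lift rv es \<alpha> h \<gamma>') @ ss \<or>
              rev (map (crev rv es \<alpha>) (lift rv es \<alpha> {} \<sigma>)) = ps @ take k (lift rv es \<alpha> h \<gamma>') @ ss) \<and>
     (u, h) \<in> set (gverts (cvx sc) (crev rv es \<alpha>) (s, {}) (lift rv es \<alpha> {} \<sigma>)) \<and>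
     (\<forall>j. k < j \<and> j \<le> length \<gamma>' \<longrightarrow>
        gverts (cvx sc) (crev rv es \<alpha>) (u, h) (lift rv es \<alpha> h \<gamma>') ! j
          \<notin> set (gverts (cvx sc) (crev rv es \<alpha>) (s, {}) (lift rv es \<alpha> {} \<sigma>)))"
proof -
  interpret tc D rv sc Bd w T F es \<alpha>
    by (intro tc.intro sg.intro tc_axioms.intro surf dec)
  show ?thesis using main[OF gmin sp meet] .
qed

end
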